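(* Let $R$ be a commutative ring and $N$ the normalised Moore complex functor from simplicial sets to chain complexes of $R$-modules. Equipped with the Eilenberg–Zilber shuffle map as lax symmetric monoidal structure and the Alexander–Whitney map as oplax monoidal structure (and the identity $R\cong N(\Delta[0])$ on units), $N$ satisfies the compatibility conditions: for all simplicial sets $X,Y,U,V$, the composite $N(X\times Y)\otimes N(U\times V)\xrightarrow{\mathrm{aw}\otimes\mathrm{aw}}N X\otimes N Y\otimes N U\otimes N V\cong N X\otimes N U\otimes N Y\otimes N V\xrightarrow{\mathrm{sh}\otimes\mathrm{sh}}N(X\times U)\otimes N(Y\times V)$ equals $N(X\times Y)\otimes N(U\times V)\xrightarrow{\mathrm{sh}}N(X\times Y\times U\times V)\cong N(X\times U\times Y\times V)\xrightarrow{\mathrm{aw}}N(X\times U)\otimes N(Y\times V)$ (middle maps induced by the symmetries, with Koszul signs in chain complexes), and the three unit compatibility conditions (unit map followed by counit map is the identity; compatibility of the counit with $\mathrm{sh}$ on $N( * )\otimes N( * )$; compatibility of the unit with $\mathrm{aw}$ on $N( *\times * )$) hold. Consequently the images under $N$ of simplicial (coloured) operads are Hopf dg operads.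
   Context: $N(X)_k$ is the free $R$-module on non-degenerate $k$-simplices of $X$ (equivalently $R[X_k]$ modulo degenerate simplices), with differential $d(x)=\sum_{i=0}^k(-1)^id_i(x)$. The Eilenberg–Zilber map $\mathrm{sh}:N(X)\otimes N(Y)\to N(X\times Y)$ is natural and sends $1_n\otimes1_m$ (top simplices of $\Delta[n],\Delta[m]$) to $\sum_{a}\mathrm{sign}(a)\,a$, the sum over subsets $a\subset\{1,\dots,n+m\}$ of cardinality $n$, identified with non-degenerate $(n+m)$-simplices of $\Delta[n]\times\Delta[m]$, with $\mathrm{sign}(a)$ the sign of the corresponding $(n,m)$-shuffle. The Alexander–Whitney map $\mathrm{aw}:N(X\times Y)\to N(X)\otimes N(Y)$ sends $(x,y)\in X_n\times Y_n$ to $\sum_{p=0}^n x|_{\{0..p\}}\otimes y|_{\{p..n\}}$ (front face $\otimes$ back face). Simplicial sets are cartesian, so every simplicial operad is a cocommutative Hopf operad; a Hopf dg operad is a coassociative counital comonoid for the Hadamard tensor product of operads in chain complexes. *)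

theory Defs
  imports Main
begin

text \<open>A simplicial set is given by its sets of n-simplices and the action of
  simplicial operators: for x in X_n and a monotone map f : [m] \<rightarrow> [n]
  (represented as a function on nat, only its values on {0..m} matter),
  Act X n m f x is the simplex f^* x in X_m.\<close>

record 'a sset =
  Simp :: "nat \<Rightarrow> 'a set"
  Act  :: "nat \<Rightarrow> nat \<Rightarrow> (nat \<Rightarrow> nat) \<Rightarrow> 'a \<Rightarrow> 'a"

definition is_mor :: "nat \<Rightarrow> nat \<Rightarrow> (nat \<Rightarrow> nat) \<Rightarrow> bool" where
  "is_mor m n f \<longleftrightarrow> (\<forall>i\<le>m. f i \<le> n) \<and> (\<forall>i j. i \<le> j \<and> j \<le> m \<longrightarrow> f i \<le> f j)"

definition is_sset :: "'a sset \<Rightarrow> bool" where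
  "is_sset X \<longleftrightarrow>
     (\<forall>n m f x. x \<in> Simp X n \<and> is_mor m n f \<longrightarrow> Act X n m f x \<in> Simp X m) \<and>
     (\<forall>n m f g x. x \<in> Simp X n \<and> is_mor m n f \<and> (\<forall>i\<le>m. f i = g i)
                  \<longrightarrow> Act X n m f x = Act X n m g x) \<and>
     (\<forall>n x. x \<in> Simp X n \<longrightarrow> Act X n n (\<lambda>i. i) x = x) \<and>
     (\<forall>n m k f g x. x \<in> Simp X n \<and> is_mor m n f \<and> is_mor k m g
                  \<longrightarrow> Act X m k g (Act X n m f x) = Act X n k (f \<circ> g) x)"

definition prod_sset :: "'a sset \<Rightarrow> 'b sset \<Rightarrow> ('a \<times> 'b) sset" where
  "prod_sset X Y = \<lparr> Simp = (\<lambda>n. Simp X n \<times> Simp Y n),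
                     Act = (\<lambda>n m f p. (Act X n m f (fst p), Act Y n m f (snd p))) \<rparr>"

definition pt :: "unit sset" where
  "pt = \<lparr> Simp = (\<lambda>n. UNIV), Act = (\<lambda>n m f x. ()) \<rparr>"

text \<open>Degeneracy operator sigma_j : [n+1] \<rightarrow> [n]; s_j y = Act X n (n+1) (sdeg j) y.\<close>

definition sdeg :: "nat \<Rightarrow> nat \<Rightarrow> nat" where
  "sdeg j i = (if i \<le> j then i else i - 1)"

definition degenerate :: "'a sset \<Rightarrow> nat \<Rightarrow> 'a \<Rightarrow> bool" where
  "degenerate X k x \<longleftrightarrow>
     (\<exists>n j y. k = Suc n \<and> j \<le> n \<and> y \<in> Simp X n \<and> x = Act X n (Suc n) (sdeg j) y)"

definition nondeg :: "'a sset \<Rightarrow> nat \<Rightarrow> 'a \<Rightarrow> bool" where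
  "nondeg X k x \<longleftrightarrow> x \<in> Simp X k \<and> \<not> degenerate X k x"

text \<open>Basis of N(X): pairs (k,x) with x a non-degenerate k-simplex.
  Basis of N(X) \<otimes> N(Y): pairs of such; the degree of (k,x) is k.\<close>

definition Nbasis :: "'a sset \<Rightarrow> (nat \<times> 'a) set" where
  "Nbasis X = {(k, x). nondeg X k x}"

definition fin_chain :: "'b set \<Rightarrow> ('b \<Rightarrow> 'r::zero) \<Rightarrow> bool" where
  "fin_chain B c \<longleftrightarrow> finite {b. c b \<noteq> 0} \<and> {b. c b \<noteq> 0} \<subseteq> B"

definition lin :: "('b \<Rightarrow> 'c \<Rightarrow> 'r::comm_ring_1) \<Rightarrow> ('b \<Rightarrow> 'r) \<Rightarrow> 'c \<Rightarrow> 'r" where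
  "lin F c = (\<lambda>t. \<Sum>b\<in>{b. c b \<noteq> 0}. c b * F b t)"

definition gen :: "'a sset \<Rightarrow> nat \<times> 'a \<Rightarrow> nat \<times> 'a \<Rightarrow> 'r::comm_ring_1" where
  "gen X b = (\<lambda>t. if t = b \<and> b \<in> Nbasis X then 1 else 0)"

definition gen2 :: "'a sset \<Rightarrow> 'b sset \<Rightarrow> nat \<times> 'a \<Rightarrow> nat \<times> 'b
                    \<Rightarrow> (nat \<times> 'a) \<times> (nat \<times> 'b) \<Rightarrow> 'r::comm_ring_1" where
  "gen2 X Y a b = (\<lambda>t. if t = (a, b) \<and> a \<in> Nbasis X \<and> b \<in> Nbasis Y then 1 else 0)"

definition Nmap :: "'b sset \<Rightarrow> ('a \<Rightarrow> 'b) \<Rightarrow> nat \<times> 'a \<Rightarrow> nat \<times> 'b \<Rightarrow> 'r::comm_ring_1" where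
  "Nmap X' phi b = gen X' (fst b, phi (snd b))"

definition front_face :: "'a sset \<Rightarrow> nat \<Rightarrow> nat \<Rightarrow> 'a \<Rightarrow> 'a" where
  "front_face X n p x = Act X n p (\<lambda>i. i) x"

definition back_face :: "'a sset \<Rightarrow> nat \<Rightarrow> nat \<Rightarrow> 'a \<Rightarrow> 'a" where
  "back_face X n p x = Act X n (n - p) (\<lambda>i. i + p) x"

definition aw :: "'a sset \<Rightarrow> 'b sset \<Rightarrow> nat \<times> ('a \<times> 'b)
                  \<Rightarrow> (nat \<times> 'a) \<times> (nat \<times> 'b) \<Rightarrow> 'r::comm_ring_1" where
  "aw X Y b = (\<lambda>t. \<Sum>p\<in>{0..fst b}.
       gen2 X Y (p, front_face X (fst b) p (fst (snd b))) (fst b - p, back_face Y (fst b) p (snd (snd b))) t)"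

definition shuffles :: "nat \<Rightarrow> nat \<Rightarrow> nat set set" where
  "shuffles p q = {a. a \<subseteq> {1..p+q} \<and> card a = p}"

definition sh_alpha :: "nat set \<Rightarrow> nat \<Rightarrow> nat" where
  "sh_alpha a i = card (a \<inter> {1..i})"

definition sh_beta :: "nat set \<Rightarrow> nat \<Rightarrow> nat" where
  "sh_beta a i = i - sh_alpha a i"

text \<open>Sign of the shuffle permutation: parity of its number of inversions.\<close>

definition sh_sign :: "nat set \<Rightarrow> 'r::comm_ring_1" where
  "sh_sign a = (-1) ^ card {(i, j). i \<in> a \<and> j \<notin> a \<and> 1 \<le> j \<and> j < i}"

definition sh :: "'a sset \<Rightarrow> 'b sset \<Rightarrow> (nat \<times> 'a) \<times> (nat \<times> 'b)
                  \<Rightarrow> nat \<times> ('a \<times> 'b) \<Rightarrow> 'r::comm_ring_1" where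
  "sh X Y t = (\<lambda>b. \<Sum>a\<in>shuffles (fst (fst t)) (fst (snd t)).
       sh_sign a * gen (prod_sset X Y)
         (fst (fst t) + fst (snd t),
          (Act X (fst (fst t)) (fst (fst t) + fst (snd t)) (sh_alpha a) (snd (fst t)),
           Act Y (fst (snd t)) (fst (fst t) + fst (snd t)) (sh_beta a) (snd (snd t)))) b)"

text \<open>Tensor product of two degree-0 maps (no Koszul sign arises).\<close>

definition tens :: "('a \<Rightarrow> 'c \<Rightarrow> 'r::comm_ring_1) \<Rightarrow> ('b \<Rightarrow> 'd \<Rightarrow> 'r)
                    \<Rightarrow> 'a \<times> 'b \<Rightarrow> 'c \<times> 'd \<Rightarrow> 'r" where
  "tens F G s t = F (fst s) (fst t) * G (snd s) (snd t)"

definition mid_sym :: "((nat \<times> 'x) \<times> (nat \<times> 'y)) \<times> ((nat \<times> 'u) \<times> (nat \<times> 'v))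
     \<Rightarrow> ((nat \<times> 'x) \<times> (nat \<times> 'u)) \<times> ((nat \<times> 'y) \<times> (nat \<times> 'v)) \<Rightarrow> 'r::comm_ring_1" where
  "mid_sym s t = (if t = ((fst (fst s), fst (snd s)), (snd (fst s), snd (snd s)))
                  then (-1) ^ (fst (snd (fst s)) * fst (fst (snd s))) else 0)"

definition perm4 :: "('x \<times> 'y) \<times> ('u \<times> 'v) \<Rightarrow> ('x \<times> 'u) \<times> ('y \<times> 'v)" where
  "perm4 s = ((fst (fst s), fst (snd s)), (snd (fst s), snd (snd s)))"

definition eta :: "'r \<Rightarrow> nat \<times> unit \<Rightarrow> 'r::comm_ring_1" where
  "eta r = (\<lambda>b. if b = (0, ()) then r else 0)"

definition epsN :: "(nat \<times> unit \<Rightarrow> 'r::comm_ring_1) \<Rightarrow> 'r" where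
  "epsN c = c (0, ())"

end

theory Submission
  imports Defs
begin


definition dl :: "'a \<Rightarrow> 'a \<Rightarrow> 'r::comm_ring_1" where
  "dl e s = (if s = e then 1 else 0)"

lemma lin_superset:
  assumes "finite S" "{b. c b \<noteq> 0} \<subseteq> S"
  shows "lin F c t = (\<Sum>b\<in>S. c b * F b t)"
  unfolding lin_def
  by (rule sum.mono_neutral_left) (use assms in auto)

lemma dsum_supp:
  "{s. (\<Sum>i\<in>I. w i * dl (e i) s) \<noteq> (0::'r::comm_ring_1)} \<subseteq> e ` I"
proof
  fix s assume "s \<in> {s. (\<Sum>i\<in>I. w i * dl (e i) s) \<noteq> (0::'r)}"
  then have "(\<Sum>i\<in>I. w i * dl (e i) s) \<noteq> (0::'r)" by simp
  then obtain i where "i \<in> I" "w i * dl (e i) s \<noteq> (0::'r)"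
    by (meson sum.neutral)
  then show "s \<in> e ` I" by (auto simp: dl_def split: if_splits)
qed

lemma dsum_fin:
  "finite I \<Longrightarrow> finite {s. (\<Sum>i\<in>I. w i * dl (e i) s) \<noteq> (0::'r::comm_ring_1)}"
  by (rule finite_subset[OF dsum_supp]) auto

lemma lin_delta:
  fixes w :: "'i \<Rightarrow> 'r::comm_ring_1"
  assumes "finite I"
  shows "lin G (\<lambda>s. \<Sum>i\<in>I. w i * dl (e i) s) = (\<lambda>t. \<Sum>i\<in>I. w i * G (e i) t)"
proof
  fix t
  have "lin G (\<lambda>s. \<Sum>i\<in>I. w i * dl (e i) s) t
      = (\<Sum>b\<in>e ` I. (\<Sum>i\<in>I. w i * dl (e i) b) * G b t)"
    by (rule lin_superset) (use assms dsum_supp[of w e I] in auto)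
  also have "\<dots> = (\<Sum>b\<in>e ` I. \<Sum>i\<in>I. w i * dl (e i) b * G b t)"
    by (simp add: sum_distrib_right)
  also have "\<dots> = (\<Sum>i\<in>I. \<Sum>b\<in>e ` I. w i * dl (e i) b * G b t)"
    by (rule sum.swap)
  also have "\<dots> = (\<Sum>i\<in>I. w i * G (e i) t)"
  proof (rule sum.cong[OF refl])
    fix i assume "i \<in> I"
    have "(\<Sum>b\<in>e ` I. w i * dl (e i) b * G b t) = (\<Sum>b\<in>e ` I. if e i = b then w i * G b t else 0)"
      by (rule sum.cong) (auto simp: dl_def)
    also have "\<dots> = w i * G (e i) t" using assms \<open>i \<in> I\<close> by (simp add: sum.delta)
    finally show "(\<Sum>b\<in>e ` I. w i * dl (e i) b * G b t) = w i * G (e i) t" .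
  qed
  finally show "lin G (\<lambda>s. \<Sum>i\<in>I. w i * dl (e i) s) t = (\<Sum>i\<in>I. w i * G (e i) t)" .
qed

lemma lin_comp:
  assumes fc: "finite {b. c b \<noteq> 0}" and fF: "\<And>b. c b \<noteq> 0 \<Longrightarrow> finite {s. F b s \<noteq> 0}"
  shows "lin G (lin F c) = lin (\<lambda>b. lin G (F b)) c"
proof
  fix t
  define C where "C = {b. c b \<noteq> 0}"
  define S where "S = (\<Union>b\<in>C. {s. F b s \<noteq> 0})"
  have fS: "finite S" unfolding S_def C_def using fc fF by auto
  have sub: "{s. lin F c s \<noteq> 0} \<subseteq> S"
  proof
    fix s assume "s \<in> {s. lin F c s \<noteq> 0}"
    then have "(\<Sum>b\<in>C. c b * F b s) \<noteq> 0" by (simp add: lin_def C_def)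
    then obtain b where "b \<in> C" "c b * F b s \<noteq> 0" by (meson sum.neutral)
    then show "s \<in> S" by (auto simp: S_def intro!: bexI[of _ b])
  qed
  have "lin G (lin F c) t = (\<Sum>s\<in>S. lin F c s * G s t)"
    by (rule lin_superset[OF fS sub])
  also have "\<dots> = (\<Sum>s\<in>S. \<Sum>b\<in>C. c b * F b s * G s t)"
    by (simp add: lin_def C_def sum_distrib_right)
  also have "\<dots> = (\<Sum>b\<in>C. \<Sum>s\<in>S. c b * F b s * G s t)" by (rule sum.swap)
  also have "\<dots> = (\<Sum>b\<in>C. c b * lin G (F b) t)"
  proof (rule sum.cong[OF refl])
    fix b assume b: "b \<in> C"
    have "lin G (F b) t = (\<Sum>s\<in>S. F b s * G s t)"
      by (rule lin_superset[OF fS]) (use b in \<open>auto simp: S_def\<close>)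
    then show "(\<Sum>s\<in>S. c b * F b s * G s t) = c b * lin G (F b) t"
      by (simp add: sum_distrib_left mult.assoc)
  qed
  also have "\<dots> = lin (\<lambda>b. lin G (F b)) c t" by (simp add: lin_def C_def)
  finally show "lin G (lin F c) t = lin (\<lambda>b. lin G (F b)) c t" .
qed

lemma lin_cong:
  "(\<And>b. c b \<noteq> 0 \<Longrightarrow> F b = G b) \<Longrightarrow> lin F c = lin G c"
  unfolding lin_def by (auto intro!: sum.cong)



lemma is_mor_id: "p \<le> n \<Longrightarrow> is_mor p n (\<lambda>i. i)"
  by (auto simp: is_mor_def)

lemma is_mor_shift: "p \<le> n \<Longrightarrow> is_mor (n - p) n (\<lambda>i. i + p)"
  by (auto simp: is_mor_def)

lemma is_mor_sdeg: "j < k \<Longrightarrow> is_mor k (k - 1) (sdeg j)"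
  by (auto simp: is_mor_def sdeg_def)

lemma is_mor_comp: "is_mor m n f \<Longrightarrow> is_mor k m g \<Longrightarrow> is_mor k n (f \<circ> g)"
  unfolding is_mor_def by auto

lemma Act_in: "is_sset X \<Longrightarrow> x \<in> Simp X n \<Longrightarrow> is_mor m n f \<Longrightarrow> Act X n m f x \<in> Simp X m"
  unfolding is_sset_def by blast

lemma Act_cong: "is_sset X \<Longrightarrow> x \<in> Simp X n \<Longrightarrow> is_mor m n f \<Longrightarrow> (\<And>i. i \<le> m \<Longrightarrow> f i = g i)
   \<Longrightarrow> Act X n m f x = Act X n m g x"
  unfolding is_sset_def by blast

lemma Act_comp: "is_sset X \<Longrightarrow> x \<in> Simp X n \<Longrightarrow> is_mor m n f \<Longrightarrow> is_mor k m g
   \<Longrightarrow> Act X m k g (Act X n m f x) = Act X n k (f \<circ> g) x"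
  unfolding is_sset_def by blast

lemma Act_comp_cong:
  assumes "is_sset X" "x \<in> Simp X n" "is_mor m n f" "is_mor k m g"
    "\<And>i. i \<le> k \<Longrightarrow> f (g i) = h i"
  shows "Act X m k g (Act X n m f x) = Act X n k h x"
proof -
  have "Act X m k g (Act X n m f x) = Act X n k (f \<circ> g) x" by (rule Act_comp[OF assms(1-4)])
  also have "\<dots> = Act X n k h x"
    by (rule Act_cong[OF assms(1,2) is_mor_comp[OF assms(3,4)]]) (use assms(5) in auto)
  finally show ?thesis .
qed

definition dlt :: "nat \<Rightarrow> nat \<Rightarrow> nat" where
  "dlt j l = (if l \<le> j then l else Suc l)"

lemma deg_repeat:
  assumes X: "is_sset X" and x: "x \<in> Simp X n" and f: "is_mor k n f" and jk: "j < k"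
    and rep: "f j = f (Suc j)"
  shows "Act X n k f x = Act X (k - 1) k (sdeg j) (Act X n (k - 1) (f \<circ> dlt j) x)"
proof -
  have m1: "is_mor (k - 1) n (f \<circ> dlt j)"
    using f jk unfolding is_mor_def dlt_def by auto
  have "Act X (k - 1) k (sdeg j) (Act X n (k - 1) (f \<circ> dlt j) x) = Act X n k f x"
  proof (rule Act_comp_cong[OF X x m1 is_mor_sdeg[OF jk]])
    fix i assume "i \<le> k"
    show "(f \<circ> dlt j) (sdeg j i) = f i"
      using rep by (cases "i \<le> j"; cases "i = Suc j") (auto simp: sdeg_def dlt_def)
  qed
  then show ?thesis by simp
qed

lemma pair_rep:
  assumes X: "is_sset X" and U: "is_sset U" and x: "x \<in> Simp X n1" and u: "u \<in> Simp U n2"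
    and f: "is_mor k n1 f" and g: "is_mor k n2 g" and jk: "j < k"
    and rf: "f j = f (Suc j)" and rg: "g j = g (Suc j)"
  shows "degenerate (prod_sset X U) k (Act X n1 k f x, Act U n2 k g u)"
proof -
  have m1: "is_mor (k - 1) n1 (f \<circ> dlt j)" using f jk unfolding is_mor_def dlt_def by auto
  have m2: "is_mor (k - 1) n2 (g \<circ> dlt j)" using g jk unfolding is_mor_def dlt_def by auto
  define y where "y = (Act X n1 (k - 1) (f \<circ> dlt j) x, Act U n2 (k - 1) (g \<circ> dlt j) u)"
  have y: "y \<in> Simp (prod_sset X U) (k - 1)"
    using Act_in[OF X x m1] Act_in[OF U u m2] by (simp add: y_def prod_sset_def)
  have e: "(Act X n1 k f x, Act U n2 k g u) = Act (prod_sset X U) (k - 1) (Suc (k - 1)) (sdeg j) y"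
    using deg_repeat[OF X x f jk rf] deg_repeat[OF U u g jk rg] jk
    by (simp add: prod_sset_def y_def)
  show ?thesis unfolding degenerate_def
    by (rule exI[of _ "k - 1"], rule exI[of _ j], rule exI[of _ y]) (use jk y e in auto)
qed

lemma step_exists:
  fixes f :: "nat \<Rightarrow> nat"
  assumes "f 0 = 0" "\<And>i. f (Suc i) \<le> Suc (f i)" "Suc c \<le> f k"
  shows "\<exists>j<k. f j = c \<and> f (Suc j) = Suc c"
  using assms(3)
proof (induction k)
  case 0 then show ?case using assms(1) by simp
next
  case (Suc k)
  show ?case
  proof (cases "Suc c \<le> f k")
    case True then show ?thesis using Suc.IH by (meson less_Suc_eq)
  next
    case False
    then have "f k = c" "f (Suc k) = Suc c" using Suc.prems assms(2)[of k] by (simp_all add: le_antisym)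
    then show ?thesis by blast
  qed
qed

lemma deg_left:
  assumes X: "is_sset X" and U: "is_sset U" and x: "x \<in> Simp X p" and u: "u \<in> Simp U r"
    and f: "is_mor k p f" and g: "is_mor k r g"
    and dx: "degenerate X p x"
    and st: "\<And>i. i < p \<Longrightarrow> \<exists>j<k. f j = i \<and> f (Suc j) = Suc i \<and> g j = g (Suc j)"
  shows "degenerate (prod_sset X U) k (Act X p k f x, Act U r k g u)"
proof -
  obtain p' i y where p: "p = Suc p'" and i: "i \<le> p'" and y: "y \<in> Simp X p'"
    and xe: "x = Act X p' (Suc p') (sdeg i) y"
    using dx unfolding degenerate_def by blast
  obtain j where j: "j < k" "f j = i" "f (Suc j) = Suc i" "g j = g (Suc j)"
    using st[of i] i p by auto
  have ms: "is_mor p p' (sdeg i)" using is_mor_sdeg[of i p] i p by simp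
  have m: "is_mor k p' (sdeg i \<circ> f)" by (rule is_mor_comp[OF ms f])
  have "Act X p k f x = Act X p' k (sdeg i \<circ> f) y"
    using Act_comp[OF X y ms f] xe p by simp
  moreover have "degenerate (prod_sset X U) k (Act X p' k (sdeg i \<circ> f) y, Act U r k g u)"
    by (rule pair_rep[OF X U y u m g j(1)]) (use j in \<open>auto simp: sdeg_def\<close>)
  ultimately show ?thesis by simp
qed

lemma deg_right:
  assumes X: "is_sset X" and U: "is_sset U" and x: "x \<in> Simp X p" and u: "u \<in> Simp U r"
    and f: "is_mor k p f" and g: "is_mor k r g"
    and du: "degenerate U r u"
    and st: "\<And>i. i < r \<Longrightarrow> \<exists>j<k. g j = i \<and> g (Suc j) = Suc i \<and> f j = f (Suc j)"
  shows "degenerate (prod_sset X U) k (Act X p k f x, Act U r k g u)"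
proof -
  obtain r' i y where p: "r = Suc r'" and i: "i \<le> r'" and y: "y \<in> Simp U r'"
    and xe: "u = Act U r' (Suc r') (sdeg i) y"
    using du unfolding degenerate_def by blast
  obtain j where j: "j < k" "g j = i" "g (Suc j) = Suc i" "f j = f (Suc j)"
    using st[of i] i p by auto
  have ms: "is_mor r r' (sdeg i)" using is_mor_sdeg[of i r] i p by simp
  have m: "is_mor k r' (sdeg i \<circ> g)" by (rule is_mor_comp[OF ms g])
  have "Act U r k g u = Act U r' k (sdeg i \<circ> g) y"
    using Act_comp[OF U y ms g] xe p by simp
  moreover have "degenerate (prod_sset X U) k (Act X p k f x, Act U r' k (sdeg i \<circ> g) y)"
    by (rule pair_rep[OF X U x y f m j(1)]) (use j in \<open>auto simp: sdeg_def\<close>)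
  ultimately show ?thesis by simp
qed

lemma split_deg:
  assumes X: "is_sset X" and Y: "is_sset Y" and U: "is_sset U" and V: "is_sset V"
    and wx: "wx \<in> Simp X N'" and wy: "wy \<in> Simp Y N'" and wu: "wu \<in> Simp U N'" and wv: "wv \<in> Simp V N'"
    and j: "j \<le> N'" and k: "k \<le> Suc N'"
  shows "degenerate (prod_sset X U) k (Act X (Suc N') k (\<lambda>i. i) (Act X N' (Suc N') (sdeg j) wx),
                                       Act U (Suc N') k (\<lambda>i. i) (Act U N' (Suc N') (sdeg j) wu))
       \<or> degenerate (prod_sset Y V) (Suc N' - k)
           (Act Y (Suc N') (Suc N' - k) (\<lambda>i. i + k) (Act Y N' (Suc N') (sdeg j) wy),
            Act V (Suc N') (Suc N' - k) (\<lambda>i. i + k) (Act V N' (Suc N') (sdeg j) wv))"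
proof (cases "j < k")
  case True
  have ms: "is_mor (Suc N') N' (sdeg j)" using is_mor_sdeg[of j "Suc N'"] j by simp
  have mk: "is_mor k N' (sdeg j)" using j k unfolding is_mor_def sdeg_def by auto
  have i: "is_mor k (Suc N') (\<lambda>i. i)" using k by (rule is_mor_id)
  have e1: "Act X (Suc N') k (\<lambda>i. i) (Act X N' (Suc N') (sdeg j) wx) = Act X N' k (sdeg j) wx"
    by (rule Act_comp_cong[OF X wx ms i]) simp
  have e2: "Act U (Suc N') k (\<lambda>i. i) (Act U N' (Suc N') (sdeg j) wu) = Act U N' k (sdeg j) wu"
    by (rule Act_comp_cong[OF U wu ms i]) simp
  have "degenerate (prod_sset X U) k (Act X N' k (sdeg j) wx, Act U N' k (sdeg j) wu)"
    by (rule pair_rep[OF X U wx wu mk mk True]) (auto simp: sdeg_def)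
  then show ?thesis using e1 e2 by simp
next
  case False
  have ms: "is_mor (Suc N') N' (sdeg j)" using is_mor_sdeg[of j "Suc N'"] j by simp
  have mk: "is_mor (Suc N' - k) N' (\<lambda>i. sdeg j (i + k))" using j k unfolding is_mor_def sdeg_def by auto
  have i: "is_mor (Suc N' - k) (Suc N') (\<lambda>i. i + k)" using k by (rule is_mor_shift)
  have e1: "Act Y (Suc N') (Suc N' - k) (\<lambda>i. i + k) (Act Y N' (Suc N') (sdeg j) wy) = Act Y N' (Suc N' - k) (\<lambda>i. sdeg j (i + k)) wy"
    by (rule Act_comp_cong[OF Y wy ms i]) simp
  have e2: "Act V (Suc N') (Suc N' - k) (\<lambda>i. i + k) (Act V N' (Suc N') (sdeg j) wv) = Act V N' (Suc N' - k) (\<lambda>i. sdeg j (i + k)) wv"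
    by (rule Act_comp_cong[OF V wv ms i]) simp
  have "degenerate (prod_sset Y V) (Suc N' - k) (Act Y N' (Suc N' - k) (\<lambda>i. sdeg j (i + k)) wy, Act V N' (Suc N' - k) (\<lambda>i. sdeg j (i + k)) wv)"
    by (rule pair_rep[OF Y V wy wv mk mk, of "j - k"]) (use False j in \<open>auto simp: sdeg_def\<close>)
  then show ?thesis using e1 e2 by simp
qed



lemma shuffles_finite: "finite (shuffles p q)"
proof -
  have "shuffles p q \<subseteq> Pow {1..p+q}" by (auto simp: shuffles_def)
  then show ?thesis by (rule finite_subset) simp
qed

lemma shuffleD: "a \<in> shuffles p q \<Longrightarrow> a \<subseteq> {1..p+q} \<and> card a = p \<and> finite a"
  by (auto simp: shuffles_def intro: finite_subset)

lemma alpha_0[simp]: "sh_alpha a 0 = 0"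
  by (simp add: sh_alpha_def)

lemma alpha_Suc: "finite a \<Longrightarrow> sh_alpha a (Suc i) = sh_alpha a i + (if Suc i \<in> a then 1 else 0)"
proof -
  assume fa: "finite a"
  have e: "a \<inter> {1..Suc i} = (if Suc i \<in> a then insert (Suc i) (a \<inter> {1..i}) else a \<inter> {1..i})"
    by (cases "Suc i \<in> a") (auto simp: le_Suc_eq)
  show ?thesis unfolding sh_alpha_def e using fa by auto

qed

lemma alpha_le: "sh_alpha a i \<le> i"
proof -
  have "card (a \<inter> {1..i}) \<le> card {1..i}" by (rule card_mono) auto
  then show ?thesis by (simp add: sh_alpha_def)
qed

lemma alpha_mono: "i \<le> j \<Longrightarrow> sh_alpha a i \<le> sh_alpha a j"
  unfolding sh_alpha_def by (rule card_mono) auto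

lemma beta_Suc: "finite a \<Longrightarrow> sh_beta a (Suc i) = sh_beta a i + (if Suc i \<in> a then 0 else 1)"
  using alpha_Suc[of a i] alpha_le[of a i] by (simp add: sh_beta_def)

lemma beta_mono: "finite a \<Longrightarrow> i \<le> j \<Longrightarrow> sh_beta a i \<le> sh_beta a j"
proof -
  assume fa: "finite a"
  have "\<And>i. sh_beta a i \<le> sh_beta a (Suc i)" using beta_Suc[OF fa] by simp
  then show "i \<le> j \<Longrightarrow> ?thesis" by (rule lift_Suc_mono_le)
qed

lemma alpha_top: "a \<in> shuffles p q \<Longrightarrow> sh_alpha a (p + q) = p"
proof -
  assume a: "a \<in> shuffles p q"
  then have "a \<inter> {1..p+q} = a" by (auto simp: shuffles_def)
  then show ?thesis using a by (simp add: sh_alpha_def shuffles_def)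
qed

lemma beta_top: "a \<in> shuffles p q \<Longrightarrow> sh_beta a (p + q) = q"
  using alpha_top by (simp add: sh_beta_def)

lemma mor_alpha: "a \<in> shuffles p q \<Longrightarrow> is_mor (p + q) p (sh_alpha a)"
  unfolding is_mor_def
proof (intro conjI allI impI)
  fix i assume "a \<in> shuffles p q" "i \<le> p + q"
  then show "sh_alpha a i \<le> p" using alpha_mono[of i "p+q" a] alpha_top[of a p q] by simp
next
  fix i j :: nat assume "i \<le> j \<and> j \<le> p + q"
  then show "sh_alpha a i \<le> sh_alpha a j" using alpha_mono by simp
qed

lemma mor_beta: "a \<in> shuffles p q \<Longrightarrow> is_mor (p + q) q (sh_beta a)"
  unfolding is_mor_def
proof (intro conjI allI impI)
  fix i assume a: "a \<in> shuffles p q" "i \<le> p + q"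
  then show "sh_beta a i \<le> q" using beta_mono[of a i "p+q"] beta_top[of a p q] shuffleD[of a p q] by simp
next
  fix i j :: nat assume "a \<in> shuffles p q" "i \<le> j \<and> j \<le> p + q"
  then show "sh_beta a i \<le> sh_beta a j" using beta_mono shuffleD by blast
qed

lemma step_alpha:
  assumes a: "a \<in> shuffles p q" and i: "i < p"
  shows "\<exists>j<p+q. sh_alpha a j = i \<and> sh_alpha a (Suc j) = Suc i \<and> sh_beta a j = sh_beta a (Suc j)"
proof -
  have fa: "finite a" using shuffleD[OF a] by simp
  obtain j where j: "j < p + q" "sh_alpha a j = i" "sh_alpha a (Suc j) = Suc i"
    using step_exists[of "sh_alpha a" i "p+q"] alpha_Suc[OF fa] alpha_top[OF a] i by fastforce
  then have "Suc j \<in> a" using alpha_Suc[OF fa, of j] by (auto split: if_splits)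
  then show ?thesis using j beta_Suc[OF fa, of j] by auto
qed

lemma step_beta:
  assumes a: "a \<in> shuffles p q" and i: "i < q"
  shows "\<exists>j<p+q. sh_beta a j = i \<and> sh_beta a (Suc j) = Suc i \<and> sh_alpha a j = sh_alpha a (Suc j)"
proof -
  have fa: "finite a" using shuffleD[OF a] by simp
  have b0: "sh_beta a 0 = 0" by (simp add: sh_beta_def)
  obtain j where j: "j < p + q" "sh_beta a j = i" "sh_beta a (Suc j) = Suc i"
    using step_exists[of "sh_beta a" i "p+q"] beta_Suc[OF fa] beta_top[OF a] i b0 by fastforce
  then have "Suc j \<notin> a" using beta_Suc[OF fa, of j] by (auto split: if_splits)
  then show ?thesis using j alpha_Suc[OF fa, of j] by auto
qed

section \<open>Merging shuffles\<close>

definition inv_set :: "nat set \<Rightarrow> (nat \<times> nat) set" where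
  "inv_set a = {(i, j). i \<in> a \<and> j \<notin> a \<and> 1 \<le> j \<and> j < i}"

lemma sh_sign_inv: "sh_sign a = (-1) ^ card (inv_set a)"
  by (simp add: sh_sign_def inv_set_def)

lemma inv_set_finite: "finite a \<Longrightarrow> finite (inv_set a)"
proof -
  assume fa: "finite a"
  have "inv_set a \<subseteq> a \<times> {..Max a}"
  proof
    fix x assume "x \<in> inv_set a"
    then obtain i j where "x = (i, j)" "i \<in> a" "j < i" by (auto simp: inv_set_def)
    moreover have "i \<le> Max a" using fa \<open>i \<in> a\<close> by simp
    ultimately show "x \<in> a \<times> {..Max a}" by simp
  qed
  moreover have "finite (a \<times> {..Max a})" using fa by simp
  ultimately show ?thesis by (rule finite_subset)
qed

lemma merge_props:
  assumes a1: "a1 \<in> shuffles p r" and a2: "a2 \<in> shuffles q s" and k: "k = p + r"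
  defines "A \<equiv> a1 \<union> (\<lambda>i. i + k) ` a2"
  shows "A \<in> shuffles (p + q) (r + s)"
    and "\<And>i. i \<le> k \<Longrightarrow> sh_alpha A i = sh_alpha a1 i"
    and "\<And>i. sh_alpha A (i + k) = p + sh_alpha a2 i"
    and "A \<inter> {1..k} = a1"
    and "(\<lambda>i. i - k) ` (A \<inter> {k<..}) = a2"
proof -
  have s1: "a1 \<subseteq> {1..k}" "card a1 = p" "finite a1" using shuffleD[OF a1] k by auto
  have s2: "a2 \<subseteq> {1..q+s}" "card a2 = q" "finite a2" using shuffleD[OF a2] by auto
  have b1: "\<And>x. x \<in> a1 \<Longrightarrow> 1 \<le> x \<and> x \<le> k" using s1 by auto
  have b2: "\<And>x. x \<in> a2 \<Longrightarrow> 1 \<le> x \<and> x \<le> q + s" using s2 by auto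
  have disj: "a1 \<inter> (\<lambda>i. i + k) ` a2 = {}" using b1 b2 by force
  have inj: "inj_on (\<lambda>i. i + k) X" for X by (auto simp: inj_on_def)
  have ci: "card ((\<lambda>i. i + k) ` a2) = q" using s2 by (simp add: card_image[OF inj])
  show "A \<in> shuffles (p + q) (r + s)"
    unfolding shuffles_def A_def using s1 s2 k disj ci
    by (auto simp: card_Un_disjoint card_image[OF inj])
  show "\<And>i. i \<le> k \<Longrightarrow> sh_alpha A i = sh_alpha a1 i"
  proof -
    fix i assume "i \<le> k"
    then have "A \<inter> {1..i} = a1 \<inter> {1..i}" using s2 by (auto simp: A_def)
    then show "sh_alpha A i = sh_alpha a1 i" by (simp add: sh_alpha_def)
  qed
  show "\<And>i. sh_alpha A (i + k) = p + sh_alpha a2 i"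
  proof -
    fix i
    have "A \<inter> {1..i + k} = a1 \<union> (\<lambda>i. i + k) ` (a2 \<inter> {1..i})"
      using s1 s2 by (auto simp: A_def)
    moreover have "card (a1 \<union> (\<lambda>i. i + k) ` (a2 \<inter> {1..i})) = p + card (a2 \<inter> {1..i})"
      using s1 s2 disj by (subst card_Un_disjoint) (auto simp: card_image[OF inj])
    ultimately show "sh_alpha A (i + k) = p + sh_alpha a2 i" by (simp add: sh_alpha_def)
  qed
  show "A \<inter> {1..k} = a1" using s1 s2 by (auto simp: A_def)
  show "(\<lambda>i. i - k) ` (A \<inter> {k<..}) = a2"
  proof -
    have "A \<inter> {k<..} = (\<lambda>i. i + k) ` a2" using s1 s2 by (auto simp: A_def)
    then show ?thesis by (simp add: image_image)
  qed
qed

lemma merge_sign: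
  assumes a1: "a1 \<in> shuffles p r" and a2: "a2 \<in> shuffles q s" and k: "k = p + r"
  shows "(sh_sign (a1 \<union> (\<lambda>i. i + k) ` a2) :: 'r::comm_ring_1) = (-1) ^ (q * r) * sh_sign a1 * sh_sign a2"
proof -
  define A where "A = a1 \<union> (\<lambda>i. i + k) ` a2"
  have s1: "a1 \<subseteq> {1..k}" "card a1 = p" "finite a1" using shuffleD[OF a1] k by auto
  have s2: "a2 \<subseteq> {1..q+s}" "card a2 = q" "finite a2" using shuffleD[OF a2] by auto
  have b1: "\<And>x. x \<in> a1 \<Longrightarrow> 1 \<le> x \<and> x \<le> k" using s1 by auto
  have b2: "\<And>x. x \<in> a2 \<Longrightarrow> 1 \<le> x \<and> x \<le> q + s" using s2 by auto
  define S2 where "S2 = (\<lambda>(i, j). (i + k, j + k)) ` inv_set a2"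
  define S3 where "S3 = (\<lambda>i. i + k) ` a2 \<times> ({1..k} - a1)"
  have eq: "inv_set A = inv_set a1 \<union> S2 \<union> S3"
  proof (rule set_eqI, rule iffI)
    fix x assume x: "x \<in> inv_set A"
    obtain i j where ij: "x = (i, j)" by (cases x)
    show "x \<in> inv_set a1 \<union> S2 \<union> S3"
    proof (cases "i \<in> a1")
      case True
      then show ?thesis using x ij s1 by (auto simp: inv_set_def A_def)
    next
      case False
      then obtain i' where i': "i' \<in> a2" "i = i' + k" using x ij by (auto simp: inv_set_def A_def)
      show ?thesis
      proof (cases "j \<le> k")
        case True
        then show ?thesis using x ij i' by (auto simp: inv_set_def A_def S3_def)
      next
        case False
        define j' where "j' = j - k"
        have j': "j = j' + k" "1 \<le> j'" using False by (auto simp: j'_def)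
        have "(i', j') \<in> inv_set a2" using x ij i' j' by (auto simp: inv_set_def A_def)
        then show ?thesis using ij i' j' by (auto simp: S2_def)
      qed
    qed
  next
    fix x assume "x \<in> inv_set a1 \<union> S2 \<union> S3"
    then show "x \<in> inv_set A" using s1 s2
      by (auto simp: inv_set_def A_def S2_def S3_def)
  qed
  have f1: "finite (inv_set a1)" by (rule inv_set_finite[OF s1(3)])
  have f2: "finite S2" unfolding S2_def using inv_set_finite[OF s2(3)] by simp
  have f3: "finite S3" unfolding S3_def using s2 by simp
  have d12: "inv_set a1 \<inter> S2 = {}" using s1 by (auto simp: inv_set_def S2_def)
  have d3: "(inv_set a1 \<union> S2) \<inter> S3 = {}"
  proof (rule equals0I)
    fix x assume x: "x \<in> (inv_set a1 \<union> S2) \<inter> S3"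
    then obtain i' j where ij: "x = (i' + k, j)" "i' \<in> a2" "j \<le> k" by (auto simp: S3_def)
    have "1 \<le> i'" using b2 ij(2) by simp
    have "x \<notin> inv_set a1" using ij b1[of "i' + k"] \<open>1 \<le> i'\<close> by (auto simp: inv_set_def)
    moreover have "x \<notin> S2" using ij by (auto simp: S2_def inv_set_def)
    ultimately show False using x by auto
  qed
  have injp: "inj_on (\<lambda>(i, j). (i + k, j + k)) X" for X :: "(nat \<times> nat) set"
    by (auto simp: inj_on_def)
  have injs: "inj_on (\<lambda>i. i + k) X" for X by (auto simp: inj_on_def)
  have c2: "card S2 = card (inv_set a2)" unfolding S2_def by (rule card_image[OF injp])
  have "card ({1..k} - a1) = k - p" using s1 by (simp add: card_Diff_subset)
  moreover have "card ((\<lambda>i. i + k) ` a2) = q" using s2 by (simp add: card_image[OF injs])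
  ultimately have c3: "card S3 = q * r" unfolding S3_def using k by (simp add: card_cartesian_product)
  have "card (inv_set A) = card (inv_set a1) + card (inv_set a2) + q * r"
    unfolding eq using f1 f2 f3 d12 d3 by (simp add: card_Un_disjoint c2 c3)
  then show ?thesis unfolding A_def[symmetric] sh_sign_inv by (simp add: power_add)
qed

lemma split_props:
  assumes A: "A \<in> shuffles n m" and k: "k \<le> n + m"
  defines "p \<equiv> sh_alpha A k"
  defines "a1 \<equiv> A \<inter> {1..k}" and "a2 \<equiv> (\<lambda>i. i - k) ` (A \<inter> {k<..})"
  shows "p \<le> n" "k - p \<le> m" "a1 \<in> shuffles p (k - p)" "a2 \<in> shuffles (n - p) (m - (k - p))"
    "a1 \<union> (\<lambda>i. i + k) ` a2 = A"
proof -
  have s: "A \<subseteq> {1..n+m}" "card A = n" "finite A" using shuffleD[OF A] by auto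
  have bA: "\<And>x. x \<in> A \<Longrightarrow> 1 \<le> x \<and> x \<le> n + m" using s by auto
  show pn: "p \<le> n" using alpha_mono[OF k, of A] alpha_top[OF A] by (simp add: p_def)
  have pk: "p \<le> k" using alpha_le by (simp add: p_def)
  have "sh_beta A k \<le> sh_beta A (n + m)" by (rule beta_mono[OF s(3) k])
  then show rm: "k - p \<le> m" using beta_top[OF A] by (simp add: sh_beta_def p_def)
  show "a1 \<in> shuffles p (k - p)" using pk bA by (auto simp: shuffles_def a1_def p_def sh_alpha_def)
  have injm: "inj_on (\<lambda>i. i - k) (A \<inter> {k<..})" by (auto simp: inj_on_def)
  have "A = a1 \<union> (A \<inter> {k<..})" using bA by (auto simp: a1_def)
  moreover have "a1 \<inter> (A \<inter> {k<..}) = {}" by (auto simp: a1_def)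
  ultimately have "card A = card a1 + card (A \<inter> {k<..})" using s(3)
    by (metis card_Un_disjoint finite_Un)
  then have "card (A \<inter> {k<..}) = n - p" using s(2) by (simp add: a1_def p_def sh_alpha_def)
  then have ca2: "card a2 = n - p" unfolding a2_def by (simp add: card_image[OF injm])
  have "a2 \<subseteq> {1..(n - p) + (m - (k - p))}"
  proof
    fix x assume "x \<in> a2"
    then obtain i where "i \<in> A" "k < i" "x = i - k" by (auto simp: a2_def)
    then show "x \<in> {1..(n - p) + (m - (k - p))}" using bA[of i] pn rm pk by auto
  qed
  then show "a2 \<in> shuffles (n - p) (m - (k - p))" using ca2 by (simp add: shuffles_def)
  show "a1 \<union> (\<lambda>i. i + k) ` a2 = A"
  proof -
    have "(\<lambda>i. i + k) ` a2 = (\<lambda>i. i) ` (A \<inter> {k<..})" unfolding a2_def image_image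
      by (rule image_cong) auto
    then have "(\<lambda>i. i + k) ` a2 = A \<inter> {k<..}" by simp
    then show ?thesis using bA by (auto simp: a1_def)
  qed
qed



lemma Simp_prod[simp]: "Simp (prod_sset X Y) n = Simp X n \<times> Simp Y n"
  by (simp add: prod_sset_def)
lemma Act_prod[simp]: "Act (prod_sset X Y) n m f p = (Act X n m f (fst p), Act Y n m f (snd p))"
  by (simp add: prod_sset_def)
lemma Nbasis_iff: "(k, z) \<in> Nbasis X \<longleftrightarrow> z \<in> Simp X k \<and> \<not> degenerate X k z"
  by (simp add: Nbasis_def nondeg_def)

locale four =
  fixes X :: "'x sset" and Y :: "'y sset" and U :: "'u sset" and V :: "'v sset"
  assumes X: "is_sset X" and Y: "is_sset Y" and U: "is_sset U" and V: "is_sset V"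
begin

lemma key_conds:
  assumes x: "x \<in> Simp X n" and y: "y \<in> Simp Y n" and u: "u \<in> Simp U m" and v: "v \<in> Simp V m"
    and pn: "p \<le> n" and rm: "r \<le> m"
    and a1: "a1 \<in> shuffles p r" and a2: "a2 \<in> shuffles (n - p) (m - r)"
    and k: "k = p + r"
  defines "A \<equiv> a1 \<union> (\<lambda>i. i + k) ` a2"
  defines "FR \<equiv> (Act X (n+m) k (\<lambda>i. i) (Act X n (n+m) (sh_alpha A) x), Act U (n+m) k (\<lambda>i. i) (Act U m (n+m) (sh_beta A) u))"
  defines "BR \<equiv> (Act Y (n+m) (n+m-k) (\<lambda>i. i + k) (Act Y n (n+m) (sh_alpha A) y), Act V (n+m) (n+m-k) (\<lambda>i. i + k) (Act V m (n+m) (sh_beta A) v))"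
  defines "FL \<equiv> (Act X p (p + r) (sh_alpha a1) (Act X n p (\<lambda>i. i) x), Act U r (p + r) (sh_beta a1) (Act U m r (\<lambda>i. i) u))"
  defines "BL \<equiv> (Act Y (n-p) ((n-p)+(m-r)) (sh_alpha a2) (Act Y n (n-p) (\<lambda>i. i+p) y), Act V (m-r) ((n-p)+(m-r)) (sh_beta a2) (Act V m (m-r) (\<lambda>i. i+r) v))"
  shows "FL = FR" "BL = BR" "(n - p) + (m - r) = n + m - k" "A \<in> shuffles n m"
    and "(k, FR) \<in> Nbasis (prod_sset X U) \<Longrightarrow> (n + m - k, BR) \<in> Nbasis (prod_sset Y V) \<Longrightarrow>
       (p, Act X n p (\<lambda>i. i) x) \<in> Nbasis X \<and> (n - p, Act Y n (n-p) (\<lambda>i. i+p) y) \<in> Nbasis Y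
     \<and> (r, Act U m r (\<lambda>i. i) u) \<in> Nbasis U \<and> (m - r, Act V m (m-r) (\<lambda>i. i+r) v) \<in> Nbasis V
     \<and> (n + m, ((Act X n (n+m) (sh_alpha A) x, Act Y n (n+m) (sh_alpha A) y), (Act U m (n+m) (sh_beta A) u, Act V m (n+m) (sh_beta A) v)))
          \<in> Nbasis (prod_sset (prod_sset X Y) (prod_sset U V))
     \<and> (n + m, ((Act X n (n+m) (sh_alpha A) x, Act U m (n+m) (sh_beta A) u), (Act Y n (n+m) (sh_alpha A) y, Act V m (n+m) (sh_beta A) v)))
          \<in> Nbasis (prod_sset (prod_sset X U) (prod_sset Y V))"
proof -
  note mp = merge_props[OF a1 a2 k, folded A_def]
  have A: "A \<in> shuffles n m" using mp(1) pn rm by simp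
  then show "A \<in> shuffles n m" .
  have kN: "k \<le> n + m" using pn rm k by simp
  show deg: "(n - p) + (m - r) = n + m - k" using pn rm k by simp
  have ma: "is_mor (n+m) n (sh_alpha A)" using mor_alpha[OF A] .
  have mb: "is_mor (n+m) m (sh_beta A)" using mor_beta[OF A] .
  have ma1: "is_mor (p + r) p (sh_alpha a1)" using mor_alpha[OF a1] .
  have mb1: "is_mor (p + r) r (sh_beta a1)" using mor_beta[OF a1] .
  have ma2: "is_mor ((n-p)+(m-r)) (n-p) (sh_alpha a2)" using mor_alpha[OF a2] .
  have mb2: "is_mor ((n-p)+(m-r)) (m-r) (sh_beta a2)" using mor_beta[OF a2] .
  have a2le: "\<And>i. sh_alpha a2 i \<le> i" by (rule alpha_le)
  have a1le: "\<And>i. sh_alpha a1 i \<le> i" by (rule alpha_le)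
  define FC where "FC = (Act X n k (sh_alpha A) x, Act U m k (sh_beta A) u)"
  define BC where "BC = (Act Y n (n+m-k) (\<lambda>i. sh_alpha A (i + k)) y, Act V m (n+m-k) (\<lambda>i. sh_beta A (i + k)) v)"
  have "FL = FC" unfolding FL_def FC_def
  proof (simp, intro conjI)
    show "Act X p (p + r) (sh_alpha a1) (Act X n p (\<lambda>i. i) x) = Act X n k (sh_alpha A) x"
      unfolding k by (rule Act_comp_cong[OF X x is_mor_id[OF pn] ma1]) (use mp(2) k in auto)
    show "Act U r (p + r) (sh_beta a1) (Act U m r (\<lambda>i. i) u) = Act U m k (sh_beta A) u"
      unfolding k by (rule Act_comp_cong[OF U u is_mor_id[OF rm] mb1]) (use mp(2) k in \<open>auto simp: sh_beta_def\<close>)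
  qed
  moreover have "FR = FC" unfolding FR_def FC_def
  proof (simp, intro conjI)
    show "Act X (n + m) k (\<lambda>i. i) (Act X n (n + m) (sh_alpha A) x) = Act X n k (sh_alpha A) x"
      by (rule Act_comp_cong[OF X x ma is_mor_id[OF kN]]) auto
    show "Act U (n + m) k (\<lambda>i. i) (Act U m (n + m) (sh_beta A) u) = Act U m k (sh_beta A) u"
      by (rule Act_comp_cong[OF U u mb is_mor_id[OF kN]]) auto
  qed
  ultimately show FLR: "FL = FR" by simp
  have "BL = BC" unfolding BL_def BC_def deg
  proof (simp, intro conjI)
    show "Act Y (n - p) (n + m - k) (sh_alpha a2) (Act Y n (n - p) (\<lambda>i. i + p) y) = Act Y n (n + m - k) (\<lambda>i. sh_alpha A (i + k)) y"
      by (rule Act_comp_cong[OF Y y is_mor_shift[OF pn] ma2[unfolded deg]]) (use mp(3) in auto)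
    show "Act V (m - r) (n + m - k) (sh_beta a2) (Act V m (m - r) (\<lambda>i. i + r) v) = Act V m (n + m - k) (\<lambda>i. sh_beta A (i + k)) v"
      by (rule Act_comp_cong[OF V v is_mor_shift[OF rm] mb2[unfolded deg]]) (use mp(3) k a2le in \<open>auto simp: sh_beta_def\<close>)
  qed
  moreover have "BR = BC" unfolding BR_def BC_def
  proof (simp, intro conjI)
    show "Act Y (n + m) (n + m - k) (\<lambda>i. i + k) (Act Y n (n + m) (sh_alpha A) y) = Act Y n (n + m - k) (\<lambda>i. sh_alpha A (i + k)) y"
      by (rule Act_comp_cong[OF Y y ma is_mor_shift[OF kN]]) auto
    show "Act V (n + m) (n + m - k) (\<lambda>i. i + k) (Act V m (n + m) (sh_beta A) v) = Act V m (n + m - k) (\<lambda>i. sh_beta A (i + k)) v"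
      by (rule Act_comp_cong[OF V v mb is_mor_shift[OF kN]]) auto
  qed
  ultimately show BLR: "BL = BR" by simp
  assume F: "(k, FR) \<in> Nbasis (prod_sset X U)" and B: "(n + m - k, BR) \<in> Nbasis (prod_sset Y V)"
  have FLn: "\<not> degenerate (prod_sset X U) (p + r) FL" using F FLR k by (simp add: Nbasis_iff)
  have BLn: "\<not> degenerate (prod_sset Y V) ((n-p)+(m-r)) BL" using B BLR deg by (simp add: Nbasis_iff)
  have fx: "Act X n p (\<lambda>i. i) x \<in> Simp X p" by (rule Act_in[OF X x is_mor_id[OF pn]])
  have fu: "Act U m r (\<lambda>i. i) u \<in> Simp U r" by (rule Act_in[OF U u is_mor_id[OF rm]])
  have by': "Act Y n (n-p) (\<lambda>i. i+p) y \<in> Simp Y (n-p)" by (rule Act_in[OF Y y is_mor_shift[OF pn]])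
  have bv: "Act V m (m-r) (\<lambda>i. i+r) v \<in> Simp V (m-r)" by (rule Act_in[OF V v is_mor_shift[OF rm]])
  have c1: "(p, Act X n p (\<lambda>i. i) x) \<in> Nbasis X"
  proof -
    have "\<not> degenerate X p (Act X n p (\<lambda>i. i) x)"
    proof
      assume "degenerate X p (Act X n p (\<lambda>i. i) x)"
      then have "degenerate (prod_sset X U) (p + r) FL" unfolding FL_def
        by (rule deg_left[OF X U fx fu ma1 mb1]) (rule step_alpha[OF a1])
      then show False using FLn by simp
    qed
    then show ?thesis using fx by (simp add: Nbasis_iff)
  qed
  have c2: "(r, Act U m r (\<lambda>i. i) u) \<in> Nbasis U"
  proof -
    have "\<not> degenerate U r (Act U m r (\<lambda>i. i) u)"
    proof
      assume "degenerate U r (Act U m r (\<lambda>i. i) u)"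
      then have "degenerate (prod_sset X U) (p + r) FL" unfolding FL_def
        by (rule deg_right[OF X U fx fu ma1 mb1]) (rule step_beta[OF a1])
      then show False using FLn by simp
    qed
    then show ?thesis using fu by (simp add: Nbasis_iff)
  qed
  have c3: "(n - p, Act Y n (n-p) (\<lambda>i. i+p) y) \<in> Nbasis Y"
  proof -
    have "\<not> degenerate Y (n-p) (Act Y n (n-p) (\<lambda>i. i+p) y)"
    proof
      assume "degenerate Y (n-p) (Act Y n (n-p) (\<lambda>i. i+p) y)"
      then have "degenerate (prod_sset Y V) ((n-p)+(m-r)) BL" unfolding BL_def
        by (rule deg_left[OF Y V by' bv ma2 mb2]) (rule step_alpha[OF a2])
      then show False using BLn by simp
    qed
    then show ?thesis using by' by (simp add: Nbasis_iff)
  qed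
  have c4: "(m - r, Act V m (m-r) (\<lambda>i. i+r) v) \<in> Nbasis V"
  proof -
    have "\<not> degenerate V (m-r) (Act V m (m-r) (\<lambda>i. i+r) v)"
    proof
      assume "degenerate V (m-r) (Act V m (m-r) (\<lambda>i. i+r) v)"
      then have "degenerate (prod_sset Y V) ((n-p)+(m-r)) BL" unfolding BL_def
        by (rule deg_right[OF Y V by' bv ma2 mb2]) (rule step_beta[OF a2])
      then show False using BLn by simp
    qed
    then show ?thesis using bv by (simp add: Nbasis_iff)
  qed
  have zx: "Act X n (n+m) (sh_alpha A) x \<in> Simp X (n+m)" by (rule Act_in[OF X x ma])
  have zy: "Act Y n (n+m) (sh_alpha A) y \<in> Simp Y (n+m)" by (rule Act_in[OF Y y ma])
  have zu: "Act U m (n+m) (sh_beta A) u \<in> Simp U (n+m)" by (rule Act_in[OF U u mb])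
  have zv: "Act V m (n+m) (sh_beta A) v \<in> Simp V (n+m)" by (rule Act_in[OF V v mb])
  have Fn: "\<not> degenerate (prod_sset X U) k FR" using F by (simp add: Nbasis_iff)
  have Bn: "\<not> degenerate (prod_sset Y V) (n + m - k) BR" using B by (simp add: Nbasis_iff)
  have nosplit: False
    if N': "n + m = Suc N'" and j: "j \<le> N'" and wx: "wx \<in> Simp X N'" and wy: "wy \<in> Simp Y N'"
      and wu: "wu \<in> Simp U N'" and wv: "wv \<in> Simp V N'"
      and ex: "Act X n (n+m) (sh_alpha A) x = Act X N' (Suc N') (sdeg j) wx"
      and ey: "Act Y n (n+m) (sh_alpha A) y = Act Y N' (Suc N') (sdeg j) wy"
      and eu: "Act U m (n+m) (sh_beta A) u = Act U N' (Suc N') (sdeg j) wu"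
      and ev: "Act V m (n+m) (sh_beta A) v = Act V N' (Suc N') (sdeg j) wv"
    for N' j wx wy wu wv
  proof -
    have "k \<le> Suc N'" using kN N' by simp
    from split_deg[OF X Y U V wx wy wu wv j this]
    show False using Fn Bn unfolding FR_def BR_def N' ex[unfolded N'] ey[unfolded N'] eu[unfolded N'] ev[unfolded N']
      by blast
  qed
  have c5: "(n + m, ((Act X n (n+m) (sh_alpha A) x, Act Y n (n+m) (sh_alpha A) y), (Act U m (n+m) (sh_beta A) u, Act V m (n+m) (sh_beta A) v)))
          \<in> Nbasis (prod_sset (prod_sset X Y) (prod_sset U V))"
  proof -
    have "\<not> degenerate (prod_sset (prod_sset X Y) (prod_sset U V)) (n+m) ((Act X n (n+m) (sh_alpha A) x, Act Y n (n+m) (sh_alpha A) y), (Act U m (n+m) (sh_beta A) u, Act V m (n+m) (sh_beta A) v))"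
    proof
      assume "degenerate (prod_sset (prod_sset X Y) (prod_sset U V)) (n+m) ((Act X n (n+m) (sh_alpha A) x, Act Y n (n+m) (sh_alpha A) y), (Act U m (n+m) (sh_beta A) u, Act V m (n+m) (sh_beta A) v))"
      then obtain N' j w where "n + m = Suc N'" "j \<le> N'" "w \<in> Simp (prod_sset (prod_sset X Y) (prod_sset U V)) N'"
        "((Act X n (n+m) (sh_alpha A) x, Act Y n (n+m) (sh_alpha A) y), (Act U m (n+m) (sh_beta A) u, Act V m (n+m) (sh_beta A) v))
          = Act (prod_sset (prod_sset X Y) (prod_sset U V)) N' (Suc N') (sdeg j) w"
        unfolding degenerate_def by blast
      then show False using nosplit[of N' j "fst (fst w)" "snd (fst w)" "fst (snd w)" "snd (snd w)"]
        by (auto simp: mem_Times_iff)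
    qed
    then show ?thesis using zx zy zu zv by (simp add: Nbasis_iff)
  qed
  have c6: "(n + m, ((Act X n (n+m) (sh_alpha A) x, Act U m (n+m) (sh_beta A) u), (Act Y n (n+m) (sh_alpha A) y, Act V m (n+m) (sh_beta A) v)))
          \<in> Nbasis (prod_sset (prod_sset X U) (prod_sset Y V))"
  proof -
    have "\<not> degenerate (prod_sset (prod_sset X U) (prod_sset Y V)) (n+m) ((Act X n (n+m) (sh_alpha A) x, Act U m (n+m) (sh_beta A) u), (Act Y n (n+m) (sh_alpha A) y, Act V m (n+m) (sh_beta A) v))"
    proof
      assume "degenerate (prod_sset (prod_sset X U) (prod_sset Y V)) (n+m) ((Act X n (n+m) (sh_alpha A) x, Act U m (n+m) (sh_beta A) u), (Act Y n (n+m) (sh_alpha A) y, Act V m (n+m) (sh_beta A) v))"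
      then obtain N' j w where "n + m = Suc N'" "j \<le> N'" "w \<in> Simp (prod_sset (prod_sset X U) (prod_sset Y V)) N'"
        "((Act X n (n+m) (sh_alpha A) x, Act U m (n+m) (sh_beta A) u), (Act Y n (n+m) (sh_alpha A) y, Act V m (n+m) (sh_beta A) v))
          = Act (prod_sset (prod_sset X U) (prod_sset Y V)) N' (Suc N') (sdeg j) w"
        unfolding degenerate_def by blast
      then show False using nosplit[of N' j "fst (fst w)" "fst (snd w)" "snd (fst w)" "snd (snd w)"]
        by (auto simp: mem_Times_iff)
    qed
    then show ?thesis using zx zy zu zv by (simp add: Nbasis_iff)
  qed
  show "(p, Act X n p (\<lambda>i. i) x) \<in> Nbasis X \<and> (n - p, Act Y n (n-p) (\<lambda>i. i+p) y) \<in> Nbasis Y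
     \<and> (r, Act U m r (\<lambda>i. i) u) \<in> Nbasis U \<and> (m - r, Act V m (m-r) (\<lambda>i. i+r) v) \<in> Nbasis V
     \<and> (n + m, ((Act X n (n+m) (sh_alpha A) x, Act Y n (n+m) (sh_alpha A) y), (Act U m (n+m) (sh_beta A) u, Act V m (n+m) (sh_beta A) v)))
          \<in> Nbasis (prod_sset (prod_sset X Y) (prod_sset U V))
     \<and> (n + m, ((Act X n (n+m) (sh_alpha A) x, Act U m (n+m) (sh_beta A) u), (Act Y n (n+m) (sh_alpha A) y, Act V m (n+m) (sh_beta A) v)))
          \<in> Nbasis (prod_sset (prod_sset X U) (prod_sset Y V))"
    using c1 c2 c3 c4 c5 c6 by blast
qed

end


lemma gen_dl: "gen X b s = (if b \<in> Nbasis X then 1 else 0) * dl b s"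
  by (simp add: gen_def dl_def)

lemma gen2_split: "gen2 X Y a b t = gen X a (fst t) * gen Y b (snd t)"
  by (cases t) (auto simp: gen2_def gen_def)

lemma aw_dl: "aw X Y b = (\<lambda>s. \<Sum>p\<in>{0..fst b}. (if (p, front_face X (fst b) p (fst (snd b))) \<in> Nbasis X
      \<and> (fst b - p, back_face Y (fst b) p (snd (snd b))) \<in> Nbasis Y then 1 else 0)
    * dl ((p, front_face X (fst b) p (fst (snd b))), (fst b - p, back_face Y (fst b) p (snd (snd b)))) s)"
  by (auto simp: aw_def gen2_def dl_def fun_eq_iff intro!: sum.cong)

lemma tens_dsum:
  assumes "F a = (\<lambda>s. \<Sum>i\<in>I. w i * dl (e i) s)" "G b = (\<lambda>s. \<Sum>j\<in>J. w' j * dl (e' j) s)"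
    "finite I" "finite J"
  shows "tens F G (a, b) = (\<lambda>s. \<Sum>q\<in>I \<times> J. (w (fst q) * w' (snd q)) * dl (e (fst q), e' (snd q)) (s :: _ \<times> _) :: 'r::comm_ring_1)"
proof
  fix s :: "_ \<times> _"
  have "tens F G (a, b) s = (\<Sum>i\<in>I. w i * dl (e i) (fst s)) * (\<Sum>j\<in>J. w' j * dl (e' j) (snd s))"
    by (simp add: tens_def assms(1,2))
  also have "\<dots> = (\<Sum>i\<in>I. \<Sum>j\<in>J. (w i * dl (e i) (fst s)) * (w' j * dl (e' j) (snd s)))"
    by (rule sum_product)
  also have "\<dots> = (\<Sum>q\<in>I \<times> J. (w (fst q) * dl (e (fst q)) (fst s)) * (w' (snd q) * dl (e' (snd q)) (snd s)))"
    by (simp add: sum.cartesian_product split_def)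
  also have "\<dots> = (\<Sum>q\<in>I \<times> J. (w (fst q) * w' (snd q)) * dl (e (fst q), e' (snd q)) s)"
    by (rule sum.cong) (auto simp: dl_def prod_eq_iff)
  finally show "tens F G (a, b) s = (\<Sum>q\<in>I \<times> J. (w (fst q) * w' (snd q)) * dl (e (fst q), e' (snd q)) s)" .
qed



context four begin

lemma lhs_form:
  fixes n m x y u v
  defines "aXY \<equiv> \<lambda>p. ((p, front_face X n p x), (n - p, back_face Y n p y))"
  defines "aUV \<equiv> \<lambda>r. ((r, front_face U m r u), (m - r, back_face V m r v))"
  defines "cXY \<equiv> \<lambda>p. (if fst (aXY p) \<in> Nbasis X \<and> snd (aXY p) \<in> Nbasis Y then 1 else 0) :: 'r::comm_ring_1"
  defines "cUV \<equiv> \<lambda>r. (if fst (aUV r) \<in> Nbasis U \<and> snd (aUV r) \<in> Nbasis V then 1 else 0) :: 'r"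
  defines "e2 \<equiv> \<lambda>q. ((fst (aXY (fst q)), fst (aUV (snd q))), (snd (aXY (fst q)), snd (aUV (snd q))))"
  defines "W \<equiv> \<lambda>q. cXY (fst q) * cUV (snd q) * (-1) ^ ((n - fst q) * snd q)"
  shows "tens (aw X Y) (aw U V) ((n, (x, y)), (m, (u, v)))
          = (\<lambda>s. \<Sum>q\<in>{0..n} \<times> {0..m}. (cXY (fst q) * cUV (snd q)) * dl (aXY (fst q), aUV (snd q)) s)"
    and "lin mid_sym (tens (aw X Y) (aw U V) ((n, (x, y)), (m, (u, v))))
          = (\<lambda>s. \<Sum>q\<in>{0..n} \<times> {0..m}. W q * dl (e2 q) s)"
    and "lin (tens (sh X U) (sh Y V)) (lin mid_sym (tens (aw X Y) (aw U V) ((n, (x, y)), (m, (u, v)))))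
          = (\<lambda>t. \<Sum>q\<in>{0..n} \<times> {0..m}. W q * tens (sh X U) (sh Y V) (e2 q) t)"
proof -
  have h1: "aw X Y (n, (x, y)) = (\<lambda>s. \<Sum>p\<in>{0..n}. cXY p * dl (aXY p) s)"
    by (simp add: aw_dl cXY_def aXY_def)
  have h2: "aw U V (m, (u, v)) = (\<lambda>s. \<Sum>r\<in>{0..m}. cUV r * dl (aUV r) s)"
    by (simp add: aw_dl cUV_def aUV_def)
  show T1: "tens (aw X Y) (aw U V) ((n, (x, y)), (m, (u, v)))
          = (\<lambda>s. \<Sum>q\<in>{0..n} \<times> {0..m}. (cXY (fst q) * cUV (snd q)) * dl (aXY (fst q), aUV (snd q)) s)"
    by (rule tens_dsum[where F="aw X Y" and a="(n, (x, y))" and G="aw U V" and b="(m, (u, v))", OF h1 h2]) auto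
  have "lin mid_sym (tens (aw X Y) (aw U V) ((n, (x, y)), (m, (u, v))))
     = (\<lambda>t. \<Sum>q\<in>{0..n} \<times> {0..m}. (cXY (fst q) * cUV (snd q)) * mid_sym (aXY (fst q), aUV (snd q)) t)"
    unfolding T1 by (rule lin_delta) simp
  also have "\<dots> = (\<lambda>s. \<Sum>q\<in>{0..n} \<times> {0..m}. W q * dl (e2 q) s)"
    by (auto simp: fun_eq_iff mid_sym_def W_def e2_def aXY_def aUV_def dl_def intro!: sum.cong)
  finally show M: "lin mid_sym (tens (aw X Y) (aw U V) ((n, (x, y)), (m, (u, v))))
          = (\<lambda>s. \<Sum>q\<in>{0..n} \<times> {0..m}. W q * dl (e2 q) s)" .
  show "lin (tens (sh X U) (sh Y V)) (lin mid_sym (tens (aw X Y) (aw U V) ((n, (x, y)), (m, (u, v)))))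
          = (\<lambda>t. \<Sum>q\<in>{0..n} \<times> {0..m}. W q * tens (sh X U) (sh Y V) (e2 q) t)"
    unfolding M by (rule lin_delta) simp
qed

lemma rhs_form:
  fixes n m x y u v
  defines "Z \<equiv> \<lambda>a. ((Act X n (n+m) (sh_alpha a) x, Act Y n (n+m) (sh_alpha a) y), (Act U m (n+m) (sh_beta a) u, Act V m (n+m) (sh_beta a) v))"
  defines "zc \<equiv> \<lambda>a. (if (n + m, Z a) \<in> Nbasis (prod_sset (prod_sset X Y) (prod_sset U V)) then 1 else 0) :: 'r::comm_ring_1"
  defines "pc \<equiv> \<lambda>a. (if (n + m, perm4 (Z a)) \<in> Nbasis (prod_sset (prod_sset X U) (prod_sset Y V)) then 1 else 0) :: 'r"
  shows "sh (prod_sset X Y) (prod_sset U V) ((n, (x, y)), (m, (u, v)))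
          = (\<lambda>s. \<Sum>a\<in>shuffles n m. (sh_sign a * zc a) * dl (n + m, Z a) s)"
    and "lin (Nmap (prod_sset (prod_sset X U) (prod_sset Y V)) perm4) (sh (prod_sset X Y) (prod_sset U V) ((n, (x, y)), (m, (u, v))))
          = (\<lambda>s. \<Sum>a\<in>shuffles n m. (sh_sign a * zc a * pc a) * dl (n + m, perm4 (Z a)) s)"
    and "lin (aw (prod_sset X U) (prod_sset Y V)) (lin (Nmap (prod_sset (prod_sset X U) (prod_sset Y V)) perm4) (sh (prod_sset X Y) (prod_sset U V) ((n, (x, y)), (m, (u, v)))))
          = (\<lambda>t. \<Sum>a\<in>shuffles n m. (sh_sign a * zc a * pc a) * aw (prod_sset X U) (prod_sset Y V) (n + m, perm4 (Z a)) t)"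
proof -
  show R1: "sh (prod_sset X Y) (prod_sset U V) ((n, (x, y)), (m, (u, v)))
          = (\<lambda>s. \<Sum>a\<in>shuffles n m. (sh_sign a * zc a) * dl (n + m, Z a) s)"
    by (simp add: sh_def gen_dl Z_def zc_def mult.assoc)
  have "lin (Nmap (prod_sset (prod_sset X U) (prod_sset Y V)) perm4) (sh (prod_sset X Y) (prod_sset U V) ((n, (x, y)), (m, (u, v))))
      = (\<lambda>t. \<Sum>a\<in>shuffles n m. (sh_sign a * zc a) * Nmap (prod_sset (prod_sset X U) (prod_sset Y V)) perm4 (n + m, Z a) t)"
    unfolding R1 by (rule lin_delta) (rule shuffles_finite)
  also have "\<dots> = (\<lambda>s. \<Sum>a\<in>shuffles n m. (sh_sign a * zc a * pc a) * dl (n + m, perm4 (Z a)) s)"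
    by (simp add: Nmap_def gen_dl pc_def mult.assoc)
  finally show R2: "lin (Nmap (prod_sset (prod_sset X U) (prod_sset Y V)) perm4) (sh (prod_sset X Y) (prod_sset U V) ((n, (x, y)), (m, (u, v))))
          = (\<lambda>s. \<Sum>a\<in>shuffles n m. (sh_sign a * zc a * pc a) * dl (n + m, perm4 (Z a)) s)" .
  show "lin (aw (prod_sset X U) (prod_sset Y V)) (lin (Nmap (prod_sset (prod_sset X U) (prod_sset Y V)) perm4) (sh (prod_sset X Y) (prod_sset U V) ((n, (x, y)), (m, (u, v)))))
          = (\<lambda>t. \<Sum>a\<in>shuffles n m. (sh_sign a * zc a * pc a) * aw (prod_sset X U) (prod_sset Y V) (n + m, perm4 (Z a)) t)"
    unfolding R2 by (rule lin_delta) (rule shuffles_finite)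
qed

end


context four begin

lemma summand:
  fixes t1 :: "nat \<times> ('x \<times> 'u)" and t2 :: "nat \<times> ('y \<times> 'v)"
  assumes x: "x \<in> Simp X n" and y: "y \<in> Simp Y n" and u: "u \<in> Simp U m" and v: "v \<in> Simp V m"
    and pn: "p \<le> n" and rm: "r \<le> m"
    and a1: "a1 \<in> shuffles p r" and a2: "a2 \<in> shuffles (n - p) (m - r)"
  defines "A \<equiv> a1 \<union> (\<lambda>i. i + (p + r)) ` a2"
  defines "Z \<equiv> \<lambda>a. ((Act X n (n+m) (sh_alpha a) x, Act Y n (n+m) (sh_alpha a) y), (Act U m (n+m) (sh_beta a) u, Act V m (n+m) (sh_beta a) v))"
  defines "zc \<equiv> \<lambda>a. (if (n + m, Z a) \<in> Nbasis (prod_sset (prod_sset X Y) (prod_sset U V)) then 1 else 0) :: 'r::comm_ring_1"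
  defines "pc \<equiv> \<lambda>a. (if (n + m, perm4 (Z a)) \<in> Nbasis (prod_sset (prod_sset X U) (prod_sset Y V)) then 1 else 0) :: 'r"
  defines "cXY \<equiv> (if (p, Act X n p (\<lambda>i. i) x) \<in> Nbasis X \<and> (n - p, Act Y n (n-p) (\<lambda>i. i+p) y) \<in> Nbasis Y then 1 else 0) :: 'r"
  defines "cUV \<equiv> (if (r, Act U m r (\<lambda>i. i) u) \<in> Nbasis U \<and> (m - r, Act V m (m-r) (\<lambda>i. i+r) v) \<in> Nbasis V then 1 else 0) :: 'r"
  defines "FR \<equiv> (Act X (n+m) (p+r) (\<lambda>i. i) (Act X n (n+m) (sh_alpha A) x), Act U (n+m) (p+r) (\<lambda>i. i) (Act U m (n+m) (sh_beta A) u))"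
  defines "BR \<equiv> (Act Y (n+m) (n+m-(p+r)) (\<lambda>i. i + (p+r)) (Act Y n (n+m) (sh_alpha A) y), Act V (n+m) (n+m-(p+r)) (\<lambda>i. i + (p+r)) (Act V m (n+m) (sh_beta A) v))"
  defines "FL \<equiv> (Act X p (p + r) (sh_alpha a1) (Act X n p (\<lambda>i. i) x), Act U r (p + r) (sh_beta a1) (Act U m r (\<lambda>i. i) u))"
  defines "BL \<equiv> (Act Y (n-p) ((n-p)+(m-r)) (sh_alpha a2) (Act Y n (n-p) (\<lambda>i. i+p) y), Act V (m-r) ((n-p)+(m-r)) (sh_beta a2) (Act V m (m-r) (\<lambda>i. i+r) v))"
  shows "cXY * cUV * (-1) ^ ((n - p) * r) * ((sh_sign a1 * gen (prod_sset X U) (p + r, FL) t1) * (sh_sign a2 * gen (prod_sset Y V) ((n - p) + (m - r), BL) t2))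
       = (sh_sign A * zc A * pc A) * (gen (prod_sset X U) (p + r, FR) t1 * gen (prod_sset Y V) (n + m - (p + r), BR) t2)"
proof -
  note kc = key_conds[OF x y u v pn rm a1 a2 refl, folded A_def]
  have FLR: "FL = FR" using kc(1) unfolding FL_def FR_def .
  have BLR: "BL = BR" using kc(2) unfolding BL_def BR_def .
  have deg: "(n - p) + (m - r) = n + m - (p + r)" by (rule kc(3))
  show ?thesis
  proof (cases "(p + r, FR) \<in> Nbasis (prod_sset X U) \<and> (n + m - (p + r), BR) \<in> Nbasis (prod_sset Y V)")
    case True
    then have cs: "(p, Act X n p (\<lambda>i. i) x) \<in> Nbasis X \<and> (n - p, Act Y n (n-p) (\<lambda>i. i+p) y) \<in> Nbasis Y
     \<and> (r, Act U m r (\<lambda>i. i) u) \<in> Nbasis U \<and> (m - r, Act V m (m-r) (\<lambda>i. i+r) v) \<in> Nbasis V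
     \<and> (n + m, Z A) \<in> Nbasis (prod_sset (prod_sset X Y) (prod_sset U V))
     \<and> (n + m, perm4 (Z A)) \<in> Nbasis (prod_sset (prod_sset X U) (prod_sset Y V))"
      using kc(5)[unfolded FR_def[symmetric] BR_def[symmetric]] by (simp add: Z_def perm4_def)
    have sg: "(sh_sign A :: 'r) = (-1) ^ ((n - p) * r) * sh_sign a1 * sh_sign a2"
      unfolding A_def by (rule merge_sign[OF a1 a2 refl])
    show ?thesis using cs unfolding cXY_def cUV_def zc_def pc_def sg FLR BLR deg
      by (simp add: algebra_simps)
  next
    case False
    then have "gen (prod_sset X U) (p + r, FR) t1 * gen (prod_sset Y V) (n + m - (p + r), BR) t2 = (0::'r)"
      by (auto simp: gen_def)
    then show ?thesis unfolding FLR BLR deg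
      by (metis (no_types, lifting) mult.assoc mult.left_commute mult_zero_right)
  qed
qed

end


context four begin

lemma per_basis:
  assumes x: "x \<in> Simp X n" and y: "y \<in> Simp Y n" and u: "u \<in> Simp U m" and v: "v \<in> Simp V m"
  shows "lin (tens (sh X U) (sh Y V)) (lin (mid_sym :: _ \<Rightarrow> _ \<Rightarrow> 'r::comm_ring_1) (tens (aw X Y) (aw U V) ((n, (x, y)), (m, (u, v)))))
       = lin (aw (prod_sset X U) (prod_sset Y V)) (lin (Nmap (prod_sset (prod_sset X U) (prod_sset Y V)) perm4) (sh (prod_sset X Y) (prod_sset U V) ((n, (x, y)), (m, (u, v)))))" (is "?L = ?R")
proof
  fix t
  define Z where "Z = (\<lambda>a. ((Act X n (n+m) (sh_alpha a) x, Act Y n (n+m) (sh_alpha a) y), (Act U m (n+m) (sh_beta a) u, Act V m (n+m) (sh_beta a) v)))"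
  define zc where "zc = (\<lambda>a. (if (n + m, Z a) \<in> Nbasis (prod_sset (prod_sset X Y) (prod_sset U V)) then 1 else 0) :: 'r)"
  define pc where "pc = (\<lambda>a. (if (n + m, perm4 (Z a)) \<in> Nbasis (prod_sset (prod_sset X U) (prod_sset Y V)) then 1 else 0) :: 'r)"
  define cXY where "cXY = (\<lambda>p. (if (p, Act X n p (\<lambda>i. i) x) \<in> Nbasis X \<and> (n - p, Act Y n (n-p) (\<lambda>i. i+p) y) \<in> Nbasis Y then 1 else 0) :: 'r)"
  define cUV where "cUV = (\<lambda>r. (if (r, Act U m r (\<lambda>i. i) u) \<in> Nbasis U \<and> (m - r, Act V m (m-r) (\<lambda>i. i+r) v) \<in> Nbasis V then 1 else 0) :: 'r)"
  define FR where "FR = (\<lambda>A k. (Act X (n+m) k (\<lambda>i. i) (Act X n (n+m) (sh_alpha A) x), Act U (n+m) k (\<lambda>i. i) (Act U m (n+m) (sh_beta A) u)))"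
  define BR where "BR = (\<lambda>A k. (Act Y (n+m) (n+m-k) (\<lambda>i. i + k) (Act Y n (n+m) (sh_alpha A) y), Act V (n+m) (n+m-k) (\<lambda>i. i + k) (Act V m (n+m) (sh_beta A) v)))"
  define FL where "FL = (\<lambda>p r a1. (Act X p (p + r) (sh_alpha a1) (Act X n p (\<lambda>i. i) x), Act U r (p + r) (sh_beta a1) (Act U m r (\<lambda>i. i) u)))"
  define BL where "BL = (\<lambda>p r a2. (Act Y (n-p) ((n-p)+(m-r)) (sh_alpha a2) (Act Y n (n-p) (\<lambda>i. i+p) y), Act V (m-r) ((n-p)+(m-r)) (sh_beta a2) (Act V m (m-r) (\<lambda>i. i+r) v)))"
  define SL where "SL = (\<lambda>(q :: nat \<times> nat, z :: nat set \<times> nat set). cXY (fst q) * cUV (snd q) * (-1) ^ ((n - fst q) * snd q)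
      * ((sh_sign (fst z) * gen (prod_sset X U) (fst q + snd q, FL (fst q) (snd q) (fst z)) (fst t))
       * (sh_sign (snd z) * gen (prod_sset Y V) ((n - fst q) + (m - snd q), BL (fst q) (snd q) (snd z)) (snd t))))"
  define SR where "SR = (\<lambda>(a, k). (sh_sign a * zc a * pc a) * (gen (prod_sset X U) (k, FR a k) (fst t) * gen (prod_sset Y V) (n + m - k, BR a k) (snd t)))"
  define LI where "LI = Sigma ({0..n} \<times> {0..m}) (\<lambda>q. shuffles (fst q) (snd q) \<times> shuffles (n - fst q) (m - snd q))"
  define RI where "RI = shuffles n m \<times> {0..n+m}"
  define g where "g = (\<lambda>(q :: nat \<times> nat, z :: nat set \<times> nat set). (fst z \<union> (\<lambda>i. i + (fst q + snd q)) ` snd z, fst q + snd q))"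
  define h where "h = (\<lambda>(a, k). ((sh_alpha a k, k - sh_alpha a k), (a \<inter> {1..k}, (\<lambda>i. i - k) ` (a \<inter> {k<..}))))"
  have finJ: "finite (shuffles p r \<times> shuffles (n - p) (m - r))" for p r using shuffles_finite by simp
  have L1: "lin (tens (sh X U) (sh Y V)) (lin (mid_sym :: _ \<Rightarrow> _ \<Rightarrow> 'r) (tens (aw X Y) (aw U V) ((n, (x, y)), (m, (u, v))))) t
      = (\<Sum>q\<in>{0..n} \<times> {0..m}. \<Sum>z\<in>shuffles (fst q) (snd q) \<times> shuffles (n - fst q) (m - snd q). SL (q, z))"
    unfolding lhs_form(3)
  proof (rule sum.cong[OF refl], goal_cases)
    case (1 q)
    obtain p r where q: "q = (p, r)" by (cases q)
    have "tens (sh X U) (sh Y V)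
        (((p, front_face X n p x), r, front_face U m r u),
         (n - p, back_face Y n p y), m - r, back_face V m r v) t
       = (\<Sum>a1\<in>shuffles p r. sh_sign a1 * gen (prod_sset X U) (p + r, FL p r a1) (fst t))
       * (\<Sum>a2\<in>shuffles (n - p) (m - r). sh_sign a2 * gen (prod_sset Y V) ((n - p) + (m - r), BL p r a2) (snd t))"
      by (simp add: tens_def sh_def FL_def BL_def front_face_def back_face_def)
    also have "\<dots> = (\<Sum>a1\<in>shuffles p r. \<Sum>a2\<in>shuffles (n - p) (m - r). (sh_sign a1 * gen (prod_sset X U) (p + r, FL p r a1) (fst t))
          * (sh_sign a2 * gen (prod_sset Y V) ((n - p) + (m - r), BL p r a2) (snd t)))"
      by (rule sum_product)
    also have "\<dots> = (\<Sum>z\<in>shuffles p r \<times> shuffles (n - p) (m - r). (sh_sign (fst z) * gen (prod_sset X U) (p + r, FL p r (fst z)) (fst t))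
          * (sh_sign (snd z) * gen (prod_sset Y V) ((n - p) + (m - r), BL p r (snd z)) (snd t)))"
      by (simp add: sum.cartesian_product split_def)
    finally have eq: "tens (sh X U) (sh Y V)
        (((p, front_face X n p x), r, front_face U m r u),
         (n - p, back_face Y n p y), m - r, back_face V m r v) t
       = (\<Sum>z\<in>shuffles p r \<times> shuffles (n - p) (m - r). (sh_sign (fst z) * gen (prod_sset X U) (p + r, FL p r (fst z)) (fst t))
          * (sh_sign (snd z) * gen (prod_sset Y V) ((n - p) + (m - r), BL p r (snd z)) (snd t)))" .
    show ?case
      unfolding q fst_conv snd_conv prod.case eq by (simp add: SL_def cXY_def cUV_def front_face_def back_face_def sum_distrib_left)
  qed
  also have "\<dots> = sum SL LI" unfolding LI_def
    using sum.Sigma[of "{0..n} \<times> {0..m}" "\<lambda>q. shuffles (fst q) (snd q) \<times> shuffles (n - fst q) (m - snd q)" "\<lambda>q z. SL (q, z)"] finJ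
    by (simp add: split_def)
  finally have L: "lin (tens (sh X U) (sh Y V)) (lin (mid_sym :: _ \<Rightarrow> _ \<Rightarrow> 'r) (tens (aw X Y) (aw U V) ((n, (x, y)), (m, (u, v))))) t = sum SL LI" .
  have "lin (aw (prod_sset X U) (prod_sset Y V)) (lin (Nmap (prod_sset (prod_sset X U) (prod_sset Y V)) perm4) (sh (prod_sset X Y) (prod_sset U V) ((n, (x, y)), (m, (u, v))))) t
      = (\<Sum>a\<in>shuffles n m. \<Sum>k\<in>{0..n+m}. SR (a, k))"
    unfolding rhs_form(3)
    by (simp add: SR_def aw_def sum_distrib_left gen2_split front_face_def back_face_def perm4_def FR_def BR_def zc_def pc_def Z_def)
  also have "\<dots> = sum SR RI" unfolding RI_def
    by (simp add: sum.cartesian_product)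
  finally have R: "lin (aw (prod_sset X U) (prod_sset Y V)) (lin (Nmap (prod_sset (prod_sset X U) (prod_sset Y V)) perm4) (sh (prod_sset X Y) (prod_sset U V) ((n, (x, y)), (m, (u, v))))) t
      = sum SR RI" .
  have bij: "bij_betw g LI RI"
  proof (rule bij_betw_byWitness[where f'=h])
    show "\<forall>a\<in>LI. h (g a) = a"
    proof
      fix w assume "w \<in> LI"
      then obtain p r a1 a2 where w: "w = ((p, r), (a1, a2))" and a1: "a1 \<in> shuffles p r"
        and a2: "a2 \<in> shuffles (n - p) (m - r)" by (auto simp: LI_def)
      note mp = merge_props[OF a1 a2 refl]
      have "sh_alpha (a1 \<union> (\<lambda>i. i + (p + r)) ` a2) (p + r) = p"
        using mp(2)[of "p + r"] alpha_top[OF a1] by simp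
      then show "h (g w) = w" using mp(4,5) by (simp add: w g_def h_def)
    qed
    show "\<forall>a\<in>RI. g (h a) = a"
    proof
      fix w assume "w \<in> RI"
      then obtain A k where w: "w = (A, k)" and A: "A \<in> shuffles n m" and k: "k \<le> n + m" by (auto simp: RI_def)
      note sp = split_props[OF A k]
      have "sh_alpha A k \<le> k" by (rule alpha_le)
      then show "g (h w) = w" using sp(5) by (simp add: w g_def h_def)
    qed
    show "g ` LI \<subseteq> RI"
    proof
      fix w assume "w \<in> g ` LI"
      then obtain p r a1 a2 where w: "w = g ((p, r), (a1, a2))" and a1: "a1 \<in> shuffles p r"
        and a2: "a2 \<in> shuffles (n - p) (m - r)" and pn: "p \<le> n" and rm: "r \<le> m" by (auto simp: LI_def)
      note mp = merge_props[OF a1 a2 refl]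
      show "w \<in> RI" using mp(1) pn rm by (simp add: w g_def RI_def)
    qed
    show "h ` RI \<subseteq> LI"
    proof
      fix w assume "w \<in> h ` RI"
      then obtain A k where w: "w = h (A, k)" and A: "A \<in> shuffles n m" and k: "k \<le> n + m" by (auto simp: RI_def)
      note sp = split_props[OF A k]
      show "w \<in> LI" using sp(1-4) by (simp add: w h_def LI_def)
    qed
  qed
  have "sum SR RI = sum (\<lambda>w. SR (g w)) LI" by (rule sum.reindex_bij_betw[OF bij, symmetric])
  also have "\<dots> = sum SL LI"
  proof (rule sum.cong[OF refl])
    fix w assume "w \<in> LI"
    then obtain p r a1 a2 where w: "w = ((p, r), (a1, a2))" and a1: "a1 \<in> shuffles p r"
      and a2: "a2 \<in> shuffles (n - p) (m - r)" and pn: "p \<le> n" and rm: "r \<le> m" by (auto simp: LI_def)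
    show "SR (g w) = SL w"
      unfolding w g_def SR_def SL_def zc_def pc_def Z_def cXY_def cUV_def FR_def BR_def FL_def BL_def prod.case fst_conv snd_conv
      by (rule summand[OF x y u v pn rm a1 a2, of "fst t" "snd t", symmetric])
  qed
  finally have "sum SR RI = sum SL LI" .
  then show "?L t = ?R t" using L R by simp
qed

end


lemma lin_single:
  assumes "\<And>b. b \<noteq> b0 \<Longrightarrow> c b = 0"
  shows "lin F c t = c b0 * F b0 t"
proof -
  have "lin F c t = (\<Sum>b\<in>{b0}. c b * F b t)"
    by (rule lin_superset) (use assms in auto)
  then show ?thesis by simp
qed

lemma Nbasis_pt: "(k, z) \<in> Nbasis pt \<longleftrightarrow> k = 0"
proof
  assume "(k, z) \<in> Nbasis pt"
  then have nd: "\<not> degenerate pt k z" by (simp add: Nbasis_iff)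
  show "k = 0"
  proof (rule ccontr)
    assume "k \<noteq> 0"
    then obtain n where k: "k = Suc n" by (cases k) auto
    have "degenerate pt k z" unfolding degenerate_def
      by (rule exI[of _ n], rule exI[of _ 0], rule exI[of _ "()"]) (simp add: k pt_def)
    then show False using nd by simp
  qed
next
  assume "k = 0"
  then show "(k, z) \<in> Nbasis pt" by (simp add: Nbasis_iff degenerate_def pt_def)
qed

context four begin

lemma fin_G1: "finite {s. tens (aw X Y) (aw U V) b s \<noteq> (0::'r::comm_ring_1)}"
proof -
  obtain n x y m u v where b: "b = ((n, (x, y)), (m, (u, v)))" by (metis prod.exhaust)
  show ?thesis unfolding b lhs_form(1) by (rule dsum_fin) simp
qed

lemma fin_G2: "finite {s. lin (mid_sym :: _ \<Rightarrow> _ \<Rightarrow> 'r::comm_ring_1) (tens (aw X Y) (aw U V) b) s \<noteq> 0}"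
proof -
  obtain n x y m u v where b: "b = ((n, (x, y)), (m, (u, v)))" by (metis prod.exhaust)
  show ?thesis unfolding b lhs_form(2) by (rule dsum_fin) simp
qed

lemma fin_R1: "finite {s. sh (prod_sset X Y) (prod_sset U V) b s \<noteq> (0::'r::comm_ring_1)}"
proof -
  obtain n x y m u v where b: "b = ((n, (x, y)), (m, (u, v)))" by (metis prod.exhaust)
  show ?thesis unfolding b rhs_form(1) by (rule dsum_fin) (rule shuffles_finite)
qed

lemma fin_R2: "finite {s. lin (Nmap (prod_sset (prod_sset X U) (prod_sset Y V)) perm4) (sh (prod_sset X Y) (prod_sset U V) b) s \<noteq> (0::'r::comm_ring_1)}"
proof -
  obtain n x y m u v where b: "b = ((n, (x, y)), (m, (u, v)))" by (metis prod.exhaust)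
  show ?thesis unfolding b rhs_form(2) by (rule dsum_fin) (rule shuffles_finite)
qed

lemma part1:
  fixes c :: "(nat \<times> ('x \<times> 'y)) \<times> (nat \<times> ('u \<times> 'v)) \<Rightarrow> 'r::comm_ring_1"
  assumes "fin_chain (Nbasis (prod_sset X Y) \<times> Nbasis (prod_sset U V)) c"
  shows "lin (tens (sh X U) (sh Y V)) (lin mid_sym (lin (tens (aw X Y) (aw U V)) c))
        = lin (aw (prod_sset X U) (prod_sset Y V))
              (lin (Nmap (prod_sset (prod_sset X U) (prod_sset Y V)) perm4)
                   (lin (sh (prod_sset X Y) (prod_sset U V)) c))"
proof -
  have fc: "finite {b. c b \<noteq> 0}" and sub: "{b. c b \<noteq> 0} \<subseteq> Nbasis (prod_sset X Y) \<times> Nbasis (prod_sset U V)"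
    using assms by (auto simp: fin_chain_def)
  have "lin (tens (sh X U) (sh Y V)) (lin mid_sym (lin (tens (aw X Y) (aw U V)) c))
      = lin (tens (sh X U) (sh Y V)) (lin (\<lambda>b. lin mid_sym (tens (aw X Y) (aw U V) b)) c)"
    by (subst lin_comp[OF fc fin_G1]) rule
  also have "\<dots> = lin (\<lambda>b. lin (tens (sh X U) (sh Y V)) (lin mid_sym (tens (aw X Y) (aw U V) b))) c"
    by (rule lin_comp[OF fc fin_G2])
  also have "\<dots> = lin (\<lambda>b. lin (aw (prod_sset X U) (prod_sset Y V))
              (lin (Nmap (prod_sset (prod_sset X U) (prod_sset Y V)) perm4) (sh (prod_sset X Y) (prod_sset U V) b))) c"
  proof (rule lin_cong)
    fix b assume "c b \<noteq> 0"
    then have bb: "b \<in> Nbasis (prod_sset X Y) \<times> Nbasis (prod_sset U V)" using sub by auto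
    obtain n x y m u v where b: "b = ((n, (x, y)), (m, (u, v)))" by (metis prod.exhaust)
    have s: "x \<in> Simp X n" "y \<in> Simp Y n" "u \<in> Simp U m" "v \<in> Simp V m"
      using bb by (auto simp: b Nbasis_iff)
    show "lin (tens (sh X U) (sh Y V)) (lin mid_sym (tens (aw X Y) (aw U V) b))
        = lin (aw (prod_sset X U) (prod_sset Y V)) (lin (Nmap (prod_sset (prod_sset X U) (prod_sset Y V)) perm4) (sh (prod_sset X Y) (prod_sset U V) b))"
      unfolding b by (rule per_basis[OF s])
  qed
  also have "\<dots> = lin (aw (prod_sset X U) (prod_sset Y V))
              (lin (\<lambda>b. lin (Nmap (prod_sset (prod_sset X U) (prod_sset Y V)) perm4) (sh (prod_sset X Y) (prod_sset U V) b)) c)"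
    by (rule lin_comp[OF fc fin_R2, symmetric])
  also have "\<dots> = lin (aw (prod_sset X U) (prod_sset Y V))
              (lin (Nmap (prod_sset (prod_sset X U) (prod_sset Y V)) perm4)
                   (lin (sh (prod_sset X Y) (prod_sset U V)) c))"
    by (subst lin_comp[OF fc fin_R1]) rule
  finally show ?thesis .
qed

end

theorem mainTheorem17:
  fixes X :: "'x sset" and Y :: "'y sset" and U :: "'u sset" and V :: "'v sset"
  assumes "is_sset X" and "is_sset Y" and "is_sset U" and "is_sset V"
  shows
    "(\<forall>c :: (nat \<times> ('x \<times> 'y)) \<times> (nat \<times> ('u \<times> 'v)) \<Rightarrow> 'r::comm_ring_1.
        fin_chain (Nbasis (prod_sset X Y) \<times> Nbasis (prod_sset U V)) c \<longrightarrow>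
        lin (tens (sh X U) (sh Y V)) (lin mid_sym (lin (tens (aw X Y) (aw U V)) c))
        = lin (aw (prod_sset X U) (prod_sset Y V))
              (lin (Nmap (prod_sset (prod_sset X U) (prod_sset Y V)) perm4)
                   (lin (sh (prod_sset X Y) (prod_sset U V)) c)))
     \<and> (\<forall>r :: 'r. epsN (eta r) = r)
     \<and> (\<forall>c :: (nat \<times> unit) \<times> (nat \<times> unit) \<Rightarrow> 'r.
          fin_chain (Nbasis pt \<times> Nbasis pt) c \<longrightarrow>
          epsN (lin (Nmap pt (\<lambda>_. ())) (lin (sh pt pt) c))
          = (\<Sum>b\<in>{b. c b \<noteq> 0}. c b * epsN (\<lambda>a. if a = fst b then 1 else 0)
                                       * epsN (\<lambda>a. if a = snd b then 1 else 0)))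
     \<and> (\<forall>r :: 'r.
          lin (aw pt pt) (lin (Nmap (prod_sset pt pt) (\<lambda>_. ((), ()))) (eta r))
          = (\<lambda>t. eta r (fst t) * eta 1 (snd t)))"
proof (intro conjI allI impI)
  interpret four X Y U V by unfold_locales (rule assms)+
  fix c :: "(nat \<times> ('x \<times> 'y)) \<times> (nat \<times> ('u \<times> 'v)) \<Rightarrow> 'r::comm_ring_1"
  assume "fin_chain (Nbasis (prod_sset X Y) \<times> Nbasis (prod_sset U V)) c"
  then show "lin (tens (sh X U) (sh Y V)) (lin mid_sym (lin (tens (aw X Y) (aw U V)) c))
        = lin (aw (prod_sset X U) (prod_sset Y V))
              (lin (Nmap (prod_sset (prod_sset X U) (prod_sset Y V)) perm4)
                   (lin (sh (prod_sset X Y) (prod_sset U V)) c))"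
    by (rule part1)
next
  fix r :: 'r
  show "epsN (eta r) = r" by (simp add: epsN_def eta_def)
next
  fix c :: "(nat \<times> unit) \<times> (nat \<times> unit) \<Rightarrow> 'r"
  assume fc: "fin_chain (Nbasis pt \<times> Nbasis pt) c"
  define b0 where "b0 = ((0::nat, ()), (0::nat, ()))"
  have c0: "c b = 0" if "b \<noteq> b0" for b
  proof (rule ccontr)
    assume "c b \<noteq> 0"
    then have "b \<in> Nbasis pt \<times> Nbasis pt" using fc by (auto simp: fin_chain_def)
    then have "b = b0" by (cases b) (auto simp: b0_def Nbasis_pt)
    then show False using that by simp
  qed
  have sh0: "sh pt pt b0 = (\<lambda>z. if z = (0, ((), ())) then 1 else 0)"
  proof -
    have s: "shuffles 0 0 = {{}}" by (auto simp: shuffles_def)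
    have "(0::nat, ((), ())) \<in> Nbasis (prod_sset pt pt)" by (simp add: Nbasis_iff degenerate_def pt_def)
    then show ?thesis by (auto simp: sh_def b0_def s sh_sign_def gen_def fun_eq_iff)
  qed
  have L1: "lin (sh pt pt) c = (\<lambda>z. c b0 * sh pt pt b0 z)"
    by (rule ext, rule lin_single) (use c0 in auto)
  have "lin (Nmap pt (\<lambda>_. ())) (lin (sh pt pt) c) (0, ()) = c b0 * (if (0::nat, ((), ())) = (0, ((), ())) then 1 else 0) * Nmap pt (\<lambda>_. ()) (0, ((), ())) (0, ())"
    unfolding L1 sh0 by (rule lin_single) auto
  also have "\<dots> = c b0" by (simp add: Nmap_def gen_def Nbasis_pt)
  finally have L: "epsN (lin (Nmap pt (\<lambda>_. ())) (lin (sh pt pt) c)) = c b0" by (simp add: epsN_def)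
  have "(\<Sum>b\<in>{b. c b \<noteq> 0}. c b * epsN (\<lambda>a. if a = fst b then 1 else 0) * epsN (\<lambda>a. if a = snd b then 1 else 0))
      = (\<Sum>b\<in>{b0}. c b * epsN (\<lambda>a. if a = fst b then 1 else 0) * epsN (\<lambda>a. if a = snd b then 1 else 0))"
    by (rule sum.mono_neutral_left) (use c0 in auto)
  also have "\<dots> = c b0" by (simp add: b0_def epsN_def)
  finally show "epsN (lin (Nmap pt (\<lambda>_. ())) (lin (sh pt pt) c))
          = (\<Sum>b\<in>{b. c b \<noteq> 0}. c b * epsN (\<lambda>a. if a = fst b then 1 else 0)
                                       * epsN (\<lambda>a. if a = snd b then 1 else 0))" using L by simp
next
  fix r :: 'r
  have e0: "eta r b = 0" if "b \<noteq> (0, ())" for b using that by (simp add: eta_def)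
  have N1: "lin (Nmap (prod_sset pt pt) (\<lambda>_. ((), ()))) (eta r) = (\<lambda>t. eta r (0, ()) * Nmap (prod_sset pt pt) (\<lambda>_. ((), ())) (0, ()) t)"
    by (rule ext, rule lin_single) (use e0 in auto)
  have nb: "(0::nat, ((), ())) \<in> Nbasis (prod_sset pt pt)" by (simp add: Nbasis_iff degenerate_def pt_def)
  have e1: "\<And>b. b \<noteq> (0::nat, ((), ())) \<Longrightarrow> eta r (0, ()) * Nmap (prod_sset pt pt) (\<lambda>_. ((), ())) (0, ()) b = 0"
    by (simp add: Nmap_def gen_def)
  show "lin (aw pt pt) (lin (Nmap (prod_sset pt pt) (\<lambda>_. ((), ()))) (eta r)) = (\<lambda>t. eta r (fst t) * eta 1 (snd t))"
  proof
    fix t :: "(nat \<times> unit) \<times> (nat \<times> unit)"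
    have "lin (aw pt pt) (lin (Nmap (prod_sset pt pt) (\<lambda>_. ((), ()))) (eta r)) t
        = eta r (0, ()) * Nmap (prod_sset pt pt) (\<lambda>_. ((), ())) (0, ()) (0, ((), ())) * aw pt pt (0, ((), ())) t"
      unfolding N1 by (rule lin_single) (use e1 in auto)
    also have "\<dots> = eta r (fst t) * eta 1 (snd t)"
      using nb by (cases t) (auto simp: Nmap_def gen_def aw_def gen2_def eta_def Nbasis_pt)
    finally show "lin (aw pt pt) (lin (Nmap (prod_sset pt pt) (\<lambda>_. ((), ()))) (eta r)) t = eta r (fst t) * eta 1 (snd t)" .
  qed
qed


end
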